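(* Fix $\eta>0$ and let $X$ be a $d$-uniform $\eta$-spectrally independent complex. Then for every $0\le k\le d$, every $g:X(1)\to[0,1]$, $f=U_{1,k}g$, and every $\varepsilon>0$: \[\Pr[f-\mathbb{E}[f]\ge\varepsilon]\le 4e^{-c_\eta\varepsilon\sqrt{k}}\quad\text{and}\quad\Pr[f-\mathbb{E}[f]\le-\varepsilon]\le 4e^{-c_\eta\varepsilon\sqrt{k}},\] where $c_\eta=\frac{1}{12\max\{1,\sqrt{\eta}\}}$; probabilities and expectations are over $\pi_k$.
   Context: A $d$-uniform simplicial complex $X$ is a finite downward-closed set family with maximal sets of size $d$, $X(j)$ its faces of size $j$, with a full-support distribution $\pi_d$ on $X(d)$ inducing $\pi_j$ on $X(j)$ (draw from $\pi_d$ and take a uniform $j$-subset). The link of $s$ is $X_s=\{t\setminus s:s\subseteq t\in X\}$ with the induced distribution, and its underlying graph has vertices $X_s(1)$ and weighted edges $X_s(2)$. A graph is a $\lambda$-one-sided expander if the second eigenvalue of its normalized adjacency operator is at most $\lambda$. $X$ is $\eta$-spectrally independent if for every $2\le j\le d$ and every $s\in X(d-j)$ the graph underlying $X_s$ is an $\frac{\eta}{j}$-one-sided expander. The lift $U_{1,k}g(s)=\frac{1}{k}\sum_{v\in s}g(v)$ for $s\in X(k)$. *)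

theory Defs
  imports Complex_Main
begin

definition faces :: "'a set set \<Rightarrow> nat \<Rightarrow> 'a set set" where
  "faces X j = {s \<in> X. card s = j}"

definition uniform_complex :: "'a set set \<Rightarrow> nat \<Rightarrow> bool" where
  "uniform_complex X d \<longleftrightarrow> finite X \<and> (\<forall>s\<in>X. finite s)
     \<and> (\<forall>s\<in>X. \<forall>t. t \<subseteq> s \<longrightarrow> t \<in> X)
     \<and> (\<forall>s\<in>X. card s \<le> d)
     \<and> (\<forall>s\<in>X. \<exists>t\<in>X. s \<subseteq> t \<and> card t = d)"

definition full_support_dist :: "'a set set \<Rightarrow> nat \<Rightarrow> ('a set \<Rightarrow> real) \<Rightarrow> bool" where
  "full_support_dist X d p \<longleftrightarrow> (\<forall>s\<in>faces X d. p s > 0) \<and> sum p (faces X d) = 1"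

text \<open>Induced distribution \<pi>_j on X(j): draw from \<pi>_d and take a uniform j-subset.\<close>
definition face_dist :: "'a set set \<Rightarrow> nat \<Rightarrow> ('a set \<Rightarrow> real) \<Rightarrow> nat \<Rightarrow> 'a set \<Rightarrow> real" where
  "face_dist X d p j t = (\<Sum>s\<in>{s \<in> faces X d. t \<subseteq> s}. p s) / real (d choose j)"

definition link_cx :: "'a set set \<Rightarrow> 'a set \<Rightarrow> 'a set set" where
  "link_cx X s = {t - s | t. t \<in> X \<and> s \<subseteq> t}"

definition link_dist :: "'a set set \<Rightarrow> nat \<Rightarrow> ('a set \<Rightarrow> real) \<Rightarrow> 'a set \<Rightarrow> 'a set \<Rightarrow> real" where
  "link_dist X d p s t = p (s \<union> t) / (\<Sum>r\<in>{r \<in> faces X d. s \<subseteq> r}. p r)"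

definition graph_vertices :: "'a set set \<Rightarrow> 'a set" where
  "graph_vertices Y = {v. {v} \<in> Y}"

definition edge_weight :: "'a set set \<Rightarrow> nat \<Rightarrow> ('a set \<Rightarrow> real) \<Rightarrow> 'a \<Rightarrow> 'a \<Rightarrow> real" where
  "edge_weight Y m q u v = (if u \<noteq> v \<and> {u, v} \<in> Y then face_dist Y m q 2 {u, v} else 0)"

definition norm_adj :: "'a set set \<Rightarrow> nat \<Rightarrow> ('a set \<Rightarrow> real) \<Rightarrow> ('a \<Rightarrow> real) \<Rightarrow> 'a \<Rightarrow> real" where
  "norm_adj Y m q f u =
     (\<Sum>v\<in>graph_vertices Y. edge_weight Y m q u v * f v) / (\<Sum>v\<in>graph_vertices Y. edge_weight Y m q u v)"

definition is_eigvec :: "'a set set \<Rightarrow> nat \<Rightarrow> ('a set \<Rightarrow> real) \<Rightarrow> ('a \<Rightarrow> real) \<Rightarrow> real \<Rightarrow> bool" where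
  "is_eigvec Y m q f \<mu> \<longleftrightarrow> (\<forall>u\<in>graph_vertices Y. norm_adj Y m q f u = \<mu> * f u)
      \<and> (\<exists>u\<in>graph_vertices Y. f u \<noteq> 0)"

definition lin_indep2_on :: "'a set \<Rightarrow> ('a \<Rightarrow> real) \<Rightarrow> ('a \<Rightarrow> real) \<Rightarrow> bool" where
  "lin_indep2_on V f g \<longleftrightarrow> (\<forall>a b. (\<forall>u\<in>V. a * f u + b * g u = 0) \<longrightarrow> a = 0 \<and> b = 0)"

text \<open>Second eigenvalue (counted with multiplicity) of the normalized adjacency operator
  is at most \<lambda>: there are no two linearly independent eigenvectors with eigenvalues
  exceeding \<lambda>. (The operator is self-adjoint w.r.t. the degree-weighted inner
  product, hence diagonalizable with real spectrum.)\<close>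
definition one_sided_expander :: "'a set set \<Rightarrow> nat \<Rightarrow> ('a set \<Rightarrow> real) \<Rightarrow> real \<Rightarrow> bool" where
  "one_sided_expander Y m q lam \<longleftrightarrow>
     \<not> (\<exists>f g \<mu>1 \<mu>2. \<mu>1 > lam \<and> \<mu>2 > lam \<and> is_eigvec Y m q f \<mu>1 \<and> is_eigvec Y m q g \<mu>2
          \<and> lin_indep2_on (graph_vertices Y) f g)"

definition spectrally_independent :: "'a set set \<Rightarrow> nat \<Rightarrow> ('a set \<Rightarrow> real) \<Rightarrow> real \<Rightarrow> bool" where
  "spectrally_independent X d p \<eta> \<longleftrightarrow>
     (\<forall>j. 2 \<le> j \<and> j \<le> d \<longrightarrow>
        (\<forall>s\<in>faces X (d - j). one_sided_expander (link_cx X s) j (link_dist X d p s) (\<eta> / real j)))"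

definition lift :: "nat \<Rightarrow> ('a \<Rightarrow> real) \<Rightarrow> 'a set \<Rightarrow> real" where
  "lift k g s = (\<Sum>v\<in>s. g v) / real k"

end

theory Submission
  imports Defs "HOL-Analysis.Analysis"
begin

lemma quad_nonpos_lin_zero:
  fixes a b :: real
  assumes "\<And>t. a * t + b * t^2 \<le> 0"
  shows "a = 0"
proof -
  have up: "a * t \<le> \<bar>b\<bar> * t^2" for t
  proof -
    have "-b * t^2 \<le> \<bar>b\<bar> * t^2" by (rule mult_right_mono) auto
    then show ?thesis using assms[of t] by linarith
  qed
  have key: "c \<le> 0" if h: "\<And>t. t > 0 \<Longrightarrow> c \<le> \<bar>b\<bar> * t" for c
  proof (rule ccontr)
    assume "\<not> c \<le> 0"
    then have c: "c > 0" by simp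
    define t where "t = c / (\<bar>b\<bar> + 1)"
    have tp: "t > 0" using c by (simp add: t_def)
    have "\<bar>b\<bar> * t < c"
    proof -
      have "\<bar>b\<bar> * t = c * (\<bar>b\<bar> / (\<bar>b\<bar> + 1))" by (simp add: t_def)
      also have "\<dots> < c * 1" using c by (intro mult_strict_left_mono) auto
      finally show ?thesis by simp
    qed
    with h[OF tp] show False by simp
  qed
  have "a \<le> 0"
  proof (rule key)
    fix t :: real assume "t > 0"
    have "a * t \<le> (\<bar>b\<bar> * t) * t" using up[of t] by (simp add: power2_eq_square mult.assoc)
    then show "a \<le> \<bar>b\<bar> * t" using \<open>t > 0\<close> by (rule mult_right_le_imp_le)
  qed
  moreover have "-a \<le> 0"
  proof (rule key)
    fix t :: real assume "t > 0"
    have "(-a) * t \<le> (\<bar>b\<bar> * t) * t" using up[of "-t"] by (simp add: power2_eq_square mult.assoc)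
    then show "-a \<le> \<bar>b\<bar> * t" using \<open>t > 0\<close> by (rule mult_right_le_imp_le)
  qed
  ultimately show ?thesis by simp
qed

lemma compact_box:
  fixes V :: "'a set" and R :: real
  shows "compact {x::'a \<Rightarrow> real. \<forall>v. x v \<in> (if v \<in> V then {-R..R} else {0})}"
proof -
  let ?B = "\<lambda>v. if v \<in> V then {-R..R} else {0::real}"
  have eq: "{x::'a \<Rightarrow> real. \<forall>v. x v \<in> ?B v} = PiE UNIV ?B"
    by (auto simp: PiE_def Pi_def extensional_def)
  have "compactin (product_topology (\<lambda>i. euclidean) UNIV) (PiE UNIV ?B)"
    by (subst compactin_PiE) auto
  then show ?thesis
    by (simp only: eq euclidean_product_topology compactin_euclidean_iff)
qed

lemma rayleigh_max:
  fixes V :: "'a set" and z :: "'a \<Rightarrow> real" and W :: "'a \<Rightarrow> 'a \<Rightarrow> real" and h :: "'a \<Rightarrow> real"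
  assumes fin: "finite V" and zpos: "\<And>a. a \<in> V \<Longrightarrow> z a > 0"
    and sym: "\<And>a b. a \<in> V \<Longrightarrow> b \<in> V \<Longrightarrow> W a b = W b a"
    and row: "\<And>a. a \<in> V \<Longrightarrow> (\<Sum>b\<in>V. W a b) = \<kappa> * z a"
    and hS: "(\<Sum>a\<in>V. z a * h a) = 0"
    and hQ: "(\<Sum>a\<in>V. \<Sum>b\<in>V. W a b * h a * h b) > c * (\<Sum>a\<in>V. z a * (h a)^2)"
  shows "\<exists>x \<mu>. (\<Sum>a\<in>V. z a * x a) = 0 \<and> (\<exists>a\<in>V. x a \<noteq> 0) \<and> \<mu> > c
            \<and> (\<forall>a\<in>V. (\<Sum>b\<in>V. W a b * x b) = \<mu> * z a * x a)"
proof -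
  have zge: "z a \<ge> 0" if "a \<in> V" for a using zpos[OF that] by simp
  define S where "S x = (\<Sum>a\<in>V. z a * x a)" for x :: "'a \<Rightarrow> real"
  define N where "N x = (\<Sum>a\<in>V. z a * (x a)^2)" for x :: "'a \<Rightarrow> real"
  define Q where "Q x = (\<Sum>a\<in>V. \<Sum>b\<in>V. W a b * x a * x b)" for x :: "'a \<Rightarrow> real"
  define Bl where "Bl x y = (\<Sum>a\<in>V. \<Sum>b\<in>V. W a b * x a * y b)" for x y :: "'a \<Rightarrow> real"
  have N_nonneg: "N x \<ge> 0" for x
    unfolding N_def by (intro sum_nonneg) (auto intro!: mult_nonneg_nonneg zge)
  have N_zero: "x a = 0" if "N x = 0" "a \<in> V" for x a
  proof -
    have "\<forall>a\<in>V. z a * (x a)^2 = 0"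
      using that(1) unfolding N_def
      by (subst sum_nonneg_eq_0_iff[OF fin, symmetric]) (auto intro!: mult_nonneg_nonneg zge)
    then show ?thesis using that(2) zpos[OF that(2)] by auto
  qed
  have Q_zero: "Q x = 0" if "N x = 0" for x
    unfolding Q_def using N_zero[OF that] by simp
  have S_scale: "S (\<lambda>v. r * x v) = r * S x" for r x
    unfolding S_def by (simp add: sum_distrib_left algebra_simps)
  have N_scale: "N (\<lambda>v. r * x v) = r^2 * N x" for r x
    unfolding N_def by (simp add: sum_distrib_left algebra_simps power_mult_distrib)
  have Q_scale: "Q (\<lambda>v. r * x v) = r^2 * Q x" for r x
    unfolding Q_def by (simp add: sum_distrib_left algebra_simps power2_eq_square)
  have S_cong: "S x = S y" if "\<And>v. v \<in> V \<Longrightarrow> x v = y v" for x y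
    unfolding S_def using that by simp
  have N_cong: "N x = N y" if "\<And>v. v \<in> V \<Longrightarrow> x v = y v" for x y
    unfolding N_def using that by simp
  have Q_cong: "Q x = Q y" if "\<And>v. v \<in> V \<Longrightarrow> x v = y v" for x y
    unfolding Q_def using that by simp
  have Bl_sym: "Bl y x = Bl x y" for x y
  proof -
    have "Bl y x = (\<Sum>b\<in>V. \<Sum>a\<in>V. W a b * y a * x b)" unfolding Bl_def by (rule sum.swap)
    also have "\<dots> = Bl x y" unfolding Bl_def
      by (intro sum.cong refl) (simp add: sym mult.commute mult.left_commute)
    finally show ?thesis .
  qed
  have Q_expand: "Q (\<lambda>v. x v + t * y v) = Q x + t * (2 * Bl x y) + t^2 * Q y" for x y t
  proof -
    have "Q (\<lambda>v. x v + t * y v) = Q x + t * Bl x y + t * Bl y x + t^2 * Q y"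
      unfolding Q_def Bl_def
      by (simp add: algebra_simps sum.distrib sum_distrib_left power2_eq_square)
    then show ?thesis using Bl_sym[of x y] by simp
  qed
  have S_add: "S (\<lambda>v. x v + t * y v) = S x + t * S y" for x y t
    unfolding S_def by (simp add: algebra_simps sum.distrib sum_distrib_left)
  have N_expand: "N (\<lambda>v. x v + t * y v) = N x + t * (2 * (\<Sum>a\<in>V. z a * x a * y a)) + t^2 * N y" for x y t
    unfolding N_def by (simp add: algebra_simps sum.distrib sum_distrib_left power2_eq_square)
  define R where "R = 1 + (\<Sum>v\<in>V. 1 / z v)"
  have R1: "R \<ge> 1" unfolding R_def by (auto intro!: sum_nonneg zge)
  define Box where "Box = {x::'a \<Rightarrow> real. \<forall>v. x v \<in> (if v \<in> V then {-R..R} else {0})}"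
  define K where "K = Box \<inter> {x. S x = 0} \<inter> {x. N x = 1}"
  have contS: "continuous_on UNIV S"
    unfolding S_def by (intro continuous_intros continuous_on_product_coordinates)
  have contN: "continuous_on UNIV N"
    unfolding N_def by (intro continuous_intros continuous_on_product_coordinates)
  have contQ: "continuous_on UNIV Q"
    unfolding Q_def by (intro continuous_intros continuous_on_product_coordinates)
  have compK: "compact K"
  proof -
    have "compact Box" unfolding Box_def by (rule compact_box)
    moreover have "closed {x. S x = 0}" by (rule closed_Collect_eq[OF contS]) simp
    moreover have "closed {x. N x = 1}" by (rule closed_Collect_eq[OF contN]) simp
    ultimately show ?thesis unfolding K_def by (intro compact_Int_closed) auto
  qed
  define nrm where "nrm x = (\<lambda>v. if v \<in> V then x v / sqrt (N x) else 0)" for x :: "'a \<Rightarrow> real"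
  have nrm_K: "nrm x \<in> K" and nrm_Q: "Q (nrm x) = Q x / N x" if "S x = 0" "N x > 0" for x
  proof -
    have eq: "\<And>v. v \<in> V \<Longrightarrow> nrm x v = (1 / sqrt (N x)) * x v" unfolding nrm_def by simp
    have "S (nrm x) = S (\<lambda>v. (1 / sqrt (N x)) * x v)" by (rule S_cong) (simp add: eq)
    then have "S (nrm x) = 0" using S_scale[of "1 / sqrt (N x)" x] that(1) by simp
    moreover have "N (nrm x) = N (\<lambda>v. (1 / sqrt (N x)) * x v)" by (rule N_cong) (simp add: eq)
    then have N1: "N (nrm x) = 1" using N_scale[of "1 / sqrt (N x)" x] that(2) by (simp add: power_divide)
    moreover have "nrm x \<in> Box"
      unfolding Box_def
    proof (intro CollectI allI)
      fix v
      show "nrm x v \<in> (if v \<in> V then {-R..R} else {0})"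
      proof (cases "v \<in> V")
        case True
        have "z v * (nrm x v)^2 \<le> N (nrm x)"
          unfolding N_def using True fin
          by (intro member_le_sum) (auto intro!: mult_nonneg_nonneg zge)
        then have "z v * (nrm x v)^2 \<le> 1" using N1 by simp
        then have "(nrm x v)^2 \<le> 1 / z v" using zpos[OF True] by (simp add: field_simps)
        also have "1 / z v \<le> (\<Sum>v\<in>V. 1 / z v)"
          using True fin by (intro member_le_sum) (auto intro: less_imp_le zpos)
        also have "\<dots> \<le> R" unfolding R_def by simp
        also have "R \<le> R^2" using mult_right_mono[OF R1, of R] R1 by (simp add: power2_eq_square)
        finally have "\<bar>nrm x v\<bar> \<le> R" using R1 by (simp add: power2_le_iff_abs_le)
        then show ?thesis using True by auto
      qed (simp add: nrm_def)
    qed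
    ultimately show "nrm x \<in> K" unfolding K_def by simp
    have "Q (nrm x) = Q (\<lambda>v. (1 / sqrt (N x)) * x v)" by (rule Q_cong) (simp add: eq)
    then show "Q (nrm x) = Q x / N x" using Q_scale[of "1 / sqrt (N x)" x] that(2) by (simp add: power_divide)
  qed
  have Nh: "N h > 0"
  proof (rule ccontr)
    assume "\<not> N h > 0"
    then have "N h = 0" using N_nonneg[of h] by simp
    then show False using hQ Q_zero[of h] unfolding Q_def N_def by simp
  qed
  have hS': "S h = 0" using hS unfolding S_def .
  have "K \<noteq> {}" using nrm_K[OF hS' Nh] by auto
  then obtain xs where xsK: "xs \<in> K" and xsmax: "\<And>y. y \<in> K \<Longrightarrow> Q y \<le> Q xs"
    using continuous_attains_sup[OF compK _ continuous_on_subset[OF contQ]] by blast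
  define mu where "mu = Q xs"
  have Sxs: "S xs = 0" and Nxs: "N xs = 1" using xsK unfolding K_def by auto
  have mu_gt: "mu > c"
  proof -
    have "Q h / N h > c" using hQ Nh unfolding Q_def N_def by (simp add: field_simps)
    then show ?thesis using xsmax[OF nrm_K[OF hS' Nh]] nrm_Q[OF hS' Nh] unfolding mu_def by simp
  qed
  have glob: "Q y \<le> mu * N y" if "S y = 0" for y
  proof (cases "N y = 0")
    case True then show ?thesis using Q_zero by simp
  next
    case False
    then have Np: "N y > 0" using N_nonneg[of y] by simp
    have "Q y / N y \<le> mu" using xsmax[OF nrm_K[OF that Np]] nrm_Q[OF that Np] unfolding mu_def by simp
    then show ?thesis using Np by (simp add: field_simps)
  qed
  define e where "e a = (\<Sum>b\<in>V. W a b * xs b) - mu * z a * xs a" for a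
  have orth: "(\<Sum>a\<in>V. w a * e a) = 0" if "S w = 0" for w
  proof -
    have "Bl xs w - mu * (\<Sum>a\<in>V. z a * xs a * w a) = 0"
    proof (rule quad_nonpos_lin_zero[where b = "(Q w - mu * N w) / 2"])
      fix t :: real
      have "Q (\<lambda>v. xs v + t * w v) \<le> mu * N (\<lambda>v. xs v + t * w v)"
        using glob S_add[of xs t w] Sxs that by simp
      then have "Q xs + t * (2 * Bl xs w) + t^2 * Q w \<le> mu * (N xs + t * (2 * (\<Sum>a\<in>V. z a * xs a * w a)) + t^2 * N w)"
        by (simp add: Q_expand N_expand)
      moreover have "(Bl xs w - mu * (\<Sum>a\<in>V. z a * xs a * w a)) * t + (Q w - mu * N w) / 2 * t^2
          = ((Q xs + t * (2 * Bl xs w) + t^2 * Q w) - mu * (N xs + t * (2 * (\<Sum>a\<in>V. z a * xs a * w a)) + t^2 * N w)) / 2"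
        using Nxs unfolding mu_def by (simp add: field_simps)
      ultimately show "(Bl xs w - mu * (\<Sum>a\<in>V. z a * xs a * w a)) * t + (Q w - mu * N w) / 2 * t^2 \<le> 0"
        by simp
    qed
    moreover have "Bl xs w = (\<Sum>b\<in>V. w b * (\<Sum>a\<in>V. W b a * xs a))"
    proof -
      have "Bl xs w = (\<Sum>b\<in>V. \<Sum>a\<in>V. W a b * xs a * w b)" unfolding Bl_def by (rule sum.swap)
      also have "\<dots> = (\<Sum>b\<in>V. w b * (\<Sum>a\<in>V. W b a * xs a))"
        by (intro sum.cong refl) (simp add: sum_distrib_left sym mult.commute mult.left_commute)
      finally show ?thesis .
    qed
    ultimately show ?thesis unfolding e_def
      by (simp add: algebra_simps sum_subtractf sum_distrib_left)
  qed
  define w where "w a = e a / z a" for a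
  have Sw: "S w = 0"
  proof -
    have "S w = (\<Sum>a\<in>V. e a)" unfolding S_def w_def by (intro sum.cong refl) (simp add: zpos less_imp_neq[symmetric])
    also have "\<dots> = (\<Sum>a\<in>V. \<Sum>b\<in>V. W a b * xs b) - mu * S xs"
      unfolding e_def S_def by (simp add: sum_subtractf sum_distrib_left mult.assoc)
    also have "(\<Sum>a\<in>V. \<Sum>b\<in>V. W a b * xs b) = (\<Sum>b\<in>V. \<Sum>a\<in>V. W a b * xs b)" by (rule sum.swap)
    also have "\<dots> = (\<Sum>b\<in>V. xs b * (\<Sum>a\<in>V. W b a))"
      by (intro sum.cong refl) (simp add: sum_distrib_left sym mult.commute)
    also have "\<dots> = \<kappa> * S xs" unfolding S_def
      by (simp add: row sum_distrib_left mult.commute mult.left_commute)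
    finally show ?thesis using Sxs by simp
  qed
  have "(\<Sum>a\<in>V. (e a)^2 / z a) = 0"
    using orth[OF Sw] unfolding w_def by (simp add: power2_eq_square mult.commute)
  then have e0: "\<forall>a\<in>V. (e a)^2 / z a = 0"
    by (subst sum_nonneg_eq_0_iff[OF fin, symmetric]) (auto intro: divide_nonneg_pos zpos)
  have eig: "\<forall>a\<in>V. (\<Sum>b\<in>V. W a b * xs b) = mu * z a * xs a"
  proof
    fix a assume "a \<in> V"
    then have "e a = 0" using e0 zpos[of a] by auto
    then show "(\<Sum>b\<in>V. W a b * xs b) = mu * z a * xs a" unfolding e_def by simp
  qed
  have nz: "\<exists>a\<in>V. xs a \<noteq> 0"
  proof (rule ccontr)
    assume "\<not> (\<exists>a\<in>V. xs a \<noteq> 0)"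
    then have "N xs = 0" unfolding N_def by simp
    then show False using Nxs by simp
  qed
  show ?thesis using Sxs nz mu_gt eig unfolding S_def by blast
qed

locale cplx =
  fixes X :: "'a set set" and d :: nat and p :: "'a set \<Rightarrow> real"
  assumes uc: "uniform_complex X d" and fsd: "full_support_dist X d p"
begin

lemma ucd: "finite X" "\<forall>s\<in>X. finite s" "\<forall>s\<in>X. \<forall>t. t \<subseteq> s \<longrightarrow> t \<in> X"
  "\<forall>s\<in>X. card s \<le> d" "\<forall>s\<in>X. \<exists>t\<in>X. s \<subseteq> t \<and> card t = d"
  using uc unfolding uniform_complex_def by simp_all

lemma finX: "finite X" by (rule ucd(1))
lemma fin_mem: "s \<in> X \<Longrightarrow> finite s" using ucd(2) by blast
lemma down: "s \<in> X \<Longrightarrow> t \<subseteq> s \<Longrightarrow> t \<in> X" using ucd(3) by blast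
lemma card_le: "s \<in> X \<Longrightarrow> card s \<le> d" using ucd(4) by blast
lemma extend: "s \<in> X \<Longrightarrow> \<exists>t\<in>X. s \<subseteq> t \<and> card t = d" using ucd(5) by blast
lemma ppos: "s \<in> faces X d \<Longrightarrow> p s > 0" using fsd unfolding full_support_dist_def by (elim conjE) simp
lemma psum: "sum p (faces X d) = 1" using fsd unfolding full_support_dist_def by (elim conjE)

lemma fin_faces: "finite (faces X i)" unfolding faces_def using finX by simp
lemma faces_mem: "s \<in> faces X i \<longleftrightarrow> s \<in> X \<and> card s = i" unfolding faces_def by simp

definition Z :: "'a set \<Rightarrow> real" where
  "Z r = (\<Sum>\<sigma>\<in>faces X d. if r \<subseteq> \<sigma> then p \<sigma> else 0)"

lemma face_dist_Z: "face_dist X d p j t = Z t / real (d choose j)"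
  unfolding face_dist_def Z_def by (simp only: sum.inter_filter[OF fin_faces])

lemma Z_nonneg: "Z r \<ge> 0"
  unfolding Z_def by (intro sum_nonneg) (auto intro: less_imp_le ppos)

lemma Z_pos: assumes "r \<in> X" shows "Z r > 0"
proof -
  obtain t where t: "t \<in> X" "r \<subseteq> t" "card t = d" using extend[OF assms] by blast
  then have tf: "t \<in> faces X d" by (simp add: faces_mem)
  have "(if r \<subseteq> t then p t else 0) \<le> Z r"
    unfolding Z_def using tf by (intro member_le_sum fin_faces) (auto intro: less_imp_le ppos)
  then show ?thesis using t(2) ppos[OF tf] by simp
qed

lemma Z_zero: assumes "r \<notin> X" shows "Z r = 0"
proof -
  have "\<And>\<sigma>. \<sigma> \<in> faces X d \<Longrightarrow> \<not> r \<subseteq> \<sigma>" using assms down by (auto simp: faces_mem)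
  then show ?thesis unfolding Z_def by simp
qed

lemma Z_nz: "Z r \<noteq> 0 \<Longrightarrow> r \<in> X" using Z_zero by blast

lemma Z_empty: "Z {} = 1" unfolding Z_def using psum by simp

definition Vx :: "'a set \<Rightarrow> 'a set" where "Vx r = {a. a \<notin> r \<and> insert a r \<in> X}"

lemma fin_Vx: "finite (Vx r)"
proof -
  have "Vx r \<subseteq> \<Union>X" unfolding Vx_def by auto
  moreover have "finite (\<Union>X)" using finX fin_mem by auto
  ultimately show ?thesis by (rule finite_subset)
qed

lemma count: assumes "r \<in> X" shows "(\<Sum>a\<in>Vx r. Z (insert a r)) = real (d - card r) * Z r"
proof -
  have "(\<Sum>a\<in>Vx r. Z (insert a r)) = (\<Sum>\<sigma>\<in>faces X d. \<Sum>a\<in>Vx r. if insert a r \<subseteq> \<sigma> then p \<sigma> else 0)"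
    unfolding Z_def by (rule sum.swap)
  also have "\<dots> = (\<Sum>\<sigma>\<in>faces X d. real (d - card r) * (if r \<subseteq> \<sigma> then p \<sigma> else 0))"
  proof (intro sum.cong refl)
    fix \<sigma> assume s: "\<sigma> \<in> faces X d"
    have "(\<Sum>a\<in>Vx r. if insert a r \<subseteq> \<sigma> then p \<sigma> else 0) = (\<Sum>a\<in>{a\<in>Vx r. insert a r \<subseteq> \<sigma>}. p \<sigma>)"
      by (simp only: sum.inter_filter[OF fin_Vx, symmetric])
    also have "\<dots> = real (card {a\<in>Vx r. insert a r \<subseteq> \<sigma>}) * p \<sigma>" by simp
    also have "\<dots> = real (d - card r) * (if r \<subseteq> \<sigma> then p \<sigma> else 0)"
    proof (cases "r \<subseteq> \<sigma>")
      case True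
      have "{a\<in>Vx r. insert a r \<subseteq> \<sigma>} = \<sigma> - r"
        using True s down unfolding Vx_def by (auto simp: faces_mem)
      moreover have "card (\<sigma> - r) = d - card r"
        using True s fin_mem by (simp add: card_Diff_subset finite_subset faces_mem)
      ultimately show ?thesis using True by simp
    next
      case False
      then have "{a\<in>Vx r. insert a r \<subseteq> \<sigma>} = {}" by auto
      then show ?thesis using False by simp
    qed
    finally show "(\<Sum>a\<in>Vx r. if insert a r \<subseteq> \<sigma> then p \<sigma> else 0) = real (d - card r) * (if r \<subseteq> \<sigma> then p \<sigma> else 0)" .
  qed
  also have "\<dots> = real (d - card r) * Z r" unfolding Z_def by (simp add: sum_distrib_left)
  finally show ?thesis .
qed

lemma regroup:
  "(\<Sum>s\<in>faces X (Suc i). \<Sum>a\<in>s. \<phi> (s - {a}) a) = (\<Sum>r\<in>faces X i. \<Sum>a\<in>Vx r. \<phi> r a)"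
proof -
  let ?S = "SIGMA s:faces X (Suc i). s"
  let ?T = "SIGMA r:faces X i. Vx r"
  let ?h = "\<lambda>(s, a). (s - {a}, a)"
  have finS: "\<And>s. s \<in> faces X (Suc i) \<Longrightarrow> finite s" using fin_mem by (auto simp: faces_mem)
  have "(\<Sum>s\<in>faces X (Suc i). \<Sum>a\<in>s. \<phi> (s - {a}) a) = (\<Sum>(s, a)\<in>?S. \<phi> (s - {a}) a)"
    by (rule sum.Sigma) (auto simp: fin_faces finS)
  also have "\<dots> = (\<Sum>(r, a)\<in>?T. \<phi> r a)"
  proof -
    have bij: "bij_betw ?h ?S ?T"
      unfolding bij_betw_def
    proof
      show "inj_on ?h ?S"
      proof (rule inj_onI)
        fix x y assume x: "x \<in> ?S" and y: "y \<in> ?S" and e: "?h x = ?h y"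
        obtain s a where xs: "x = (s, a)" and a: "a \<in> s" using x by auto
        obtain s' a' where ys: "y = (s', a')" and a': "a' \<in> s'" using y by auto
        have "a = a'" and "s - {a} = s' - {a'}" using e xs ys by auto
        then have "s = s'" using a a' by (metis insert_Diff)
        then show "x = y" using xs ys \<open>a = a'\<close> by simp
      qed
      show "?h ` ?S = ?T"
      proof
        show "?h ` ?S \<subseteq> ?T"
        proof (rule subsetI)
          fix x assume "x \<in> ?h ` ?S"
          then obtain s a where s: "s \<in> faces X (Suc i)" and a: "a \<in> s" and x: "x = (s - {a}, a)" by auto
          have fs: "finite s" using finS[OF s] .
          have "s - {a} \<in> faces X i" using s a down fs by (auto simp: faces_mem)
          moreover have "a \<in> Vx (s - {a})" using s a unfolding Vx_def by (auto simp: faces_mem insert_absorb)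
          ultimately show "x \<in> ?T" using x by simp
        qed
        show "?T \<subseteq> ?h ` ?S"
        proof (rule subsetI)
          fix x assume "x \<in> ?T"
          then obtain r a where r: "r \<in> faces X i" and a: "a \<in> Vx r" and x: "x = (r, a)" by auto
          have fr: "finite r" using r fin_mem by (auto simp: faces_mem)
          have "insert a r \<in> faces X (Suc i)" using r a fr unfolding Vx_def by (auto simp: faces_mem)
          moreover have "?h (insert a r, a) = (r, a)" using a unfolding Vx_def by auto
          ultimately show "x \<in> ?h ` ?S" using x by (metis (no_types, lifting) SigmaI image_eqI insertI1)
        qed
      qed
    qed
    show ?thesis using sum.reindex_bij_betw[OF bij, of "\<lambda>(r, a). \<phi> r a"]
      by (simp add: case_prod_beta split_def)
  qed
  also have "\<dots> = (\<Sum>r\<in>faces X i. \<Sum>a\<in>Vx r. \<phi> r a)"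
    by (rule sum.Sigma[symmetric]) (auto simp: fin_faces fin_Vx)
  finally show ?thesis .
qed

lemma binom_rel: "real (Suc i) * real (d choose Suc i) = real (d - i) * real (d choose i)"
proof -
  have "Suc i * (d choose Suc i) = (d - i) * (d choose i)"
    using binomial_absorption[of i d] binomial_absorb_comp[of d i] by simp
  then show ?thesis by (metis of_nat_mult)
qed

lemma faces_X: "s \<in> faces X i \<Longrightarrow> s \<in> X" by (simp add: faces_mem)
lemma faces_card: "s \<in> faces X i \<Longrightarrow> card s = i" by (simp add: faces_mem)
lemma faces_fin: "s \<in> faces X i \<Longrightarrow> finite s" by (simp add: faces_mem fin_mem)

lemma ratio_eq:
  fixes A B C0 C1 s t :: real
  assumes "s * A = t * B" "s * C1 = t * C0" "s > 0" "t > 0" "C0 \<noteq> 0"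
  shows "A / C1 = B / C0"
proof -
  have C1: "C1 = t * C0 / s" using assms(2,3) by (simp add: field_simps)
  have A: "A = t * B / s" using assms(1,3) by (simp add: field_simps)
  show ?thesis unfolding A C1 using assms(3,4,5) by (simp add: field_simps)
qed

definition Ex :: "nat \<Rightarrow> ('a set \<Rightarrow> real) \<Rightarrow> real" where
  "Ex i F = (\<Sum>s\<in>faces X i. Z s * F s) / real (d choose i)"
definition Dn :: "nat \<Rightarrow> ('a set \<Rightarrow> real) \<Rightarrow> 'a set \<Rightarrow> real" where
  "Dn i F r = (\<Sum>a\<in>Vx r. Z (insert a r) * F (insert a r)) / (real (d - i) * Z r)"
definition Up :: "nat \<Rightarrow> ('a set \<Rightarrow> real) \<Rightarrow> 'a set \<Rightarrow> real" where
  "Up i H s = (\<Sum>a\<in>s. H (s - {a})) / real (Suc i)"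

lemma Dn_sum: assumes "r \<in> faces X i" "i < d"
  shows "(\<Sum>a\<in>Vx r. Z (insert a r) * F (insert a r)) = real (d - i) * Z r * Dn i F r"
  using Z_pos[OF faces_X[OF assms(1)]] assms(2) unfolding Dn_def by simp

lemma pairing: assumes "i < d"
  shows "Ex (Suc i) (\<lambda>s. F s * Up i H s) = Ex i (\<lambda>r. Dn i F r * H r)"
proof -
  have "(\<Sum>s\<in>faces X (Suc i). Z s * (F s * Up i H s))
      = (\<Sum>s\<in>faces X (Suc i). \<Sum>a\<in>s. (\<lambda>r a. Z (insert a r) * F (insert a r) * H r) (s - {a}) a) / real (Suc i)"
    unfolding Up_def sum_divide_distrib[symmetric]
    by (simp add: sum_distrib_left sum_divide_distrib insert_absorb mult.assoc)
  also have "\<dots> = (\<Sum>r\<in>faces X i. \<Sum>a\<in>Vx r. Z (insert a r) * F (insert a r) * H r) / real (Suc i)"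
    using regroup[where i=i and \<phi>="\<lambda>r a. Z (insert a r) * F (insert a r) * H r"] by simp
  also have "\<dots> = (\<Sum>r\<in>faces X i. real (d - i) * (Z r * (Dn i F r * H r))) / real (Suc i)"
  proof -
    have "(\<Sum>a\<in>Vx r. Z (insert a r) * F (insert a r) * H r) = real (d - i) * (Z r * (Dn i F r * H r))"
      if "r \<in> faces X i" for r
      using Dn_sum[OF that assms, of F] by (simp add: sum_distrib_right[symmetric])
    then show ?thesis by simp
  qed
  finally have "real (Suc i) * (\<Sum>s\<in>faces X (Suc i). Z s * (F s * Up i H s))
     = (\<Sum>r\<in>faces X i. real (d - i) * (Z r * (Dn i F r * H r)))"
    by (simp del: of_nat_Suc)
  then have "real (Suc i) * (\<Sum>s\<in>faces X (Suc i). Z s * (F s * Up i H s))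
     = real (d - i) * (\<Sum>r\<in>faces X i. Z r * (Dn i F r * H r))"
    by (simp add: sum_distrib_left)
  moreover have "real (d choose i) \<noteq> 0" using assms by simp
  ultimately show ?thesis unfolding Ex_def
    using binom_rel[of i] assms by (intro ratio_eq) auto
qed

lemma Up_one: "s \<in> faces X (Suc i) \<Longrightarrow> Up i (\<lambda>_. 1) s = 1"
  unfolding Up_def by (simp add: faces_card)

lemma tower: assumes "i < d" shows "Ex (Suc i) F = Ex i (Dn i F)"
proof -
  have "Ex (Suc i) F = Ex (Suc i) (\<lambda>s. F s * Up i (\<lambda>_. 1) s)"
    unfolding Ex_def by (intro arg_cong2[where f = "(/)"] sum.cong refl) (simp add: Up_one)
  also have "\<dots> = Ex i (Dn i F)" using pairing[OF assms] by simp
  finally show ?thesis .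
qed

lemma Ex_cong: "(\<And>s. s \<in> faces X i \<Longrightarrow> F s = G s) \<Longrightarrow> Ex i F = Ex i G"
  unfolding Ex_def by simp

lemma Ex_add: "Ex i (\<lambda>s. F s + G s) = Ex i F + Ex i G"
  unfolding Ex_def by (simp add: algebra_simps sum.distrib add_divide_distrib)

lemma Ex_diff: "Ex i (\<lambda>s. F s - G s) = Ex i F - Ex i G"
  unfolding Ex_def by (simp add: algebra_simps sum_subtractf diff_divide_distrib)

lemma Ex_cmult: "Ex i (\<lambda>s. c * F s) = c * Ex i F"
  unfolding Ex_def by (simp add: sum_distrib_left mult.left_commute)

lemma Ex_mono: "(\<And>s. s \<in> faces X i \<Longrightarrow> F s \<le> G s) \<Longrightarrow> Ex i F \<le> Ex i G"
  unfolding Ex_def by (intro divide_right_mono sum_mono mult_left_mono) (auto simp: Z_nonneg)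

lemma Ex_nonneg: "(\<And>s. s \<in> faces X i \<Longrightarrow> 0 \<le> F s) \<Longrightarrow> 0 \<le> Ex i F"
  unfolding Ex_def by (intro divide_nonneg_nonneg sum_nonneg mult_nonneg_nonneg) (auto simp: Z_nonneg)

lemma Ex_CS: "(Ex i (\<lambda>s. F s * G s))^2 \<le> Ex i (\<lambda>s. (F s)^2) * Ex i (\<lambda>s. (G s)^2)"
proof -
  have "(\<Sum>s\<in>faces X i. Z s * (F s * G s))^2
      = (\<Sum>s\<in>faces X i. (sqrt (Z s) * F s) * (sqrt (Z s) * G s))^2"
    using Z_nonneg by (simp add: algebra_simps real_sqrt_mult[symmetric])
  also have "\<dots> \<le> (\<Sum>s\<in>faces X i. (sqrt (Z s) * F s)^2) * (\<Sum>s\<in>faces X i. (sqrt (Z s) * G s)^2)"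
    by (rule Cauchy_Schwarz_ineq_sum)
  also have "\<dots> = (\<Sum>s\<in>faces X i. Z s * (F s)^2) * (\<Sum>s\<in>faces X i. Z s * (G s)^2)"
    using Z_nonneg by (simp add: power_mult_distrib)
  finally have h: "(\<Sum>s\<in>faces X i. Z s * (F s * G s))^2 \<le> (\<Sum>s\<in>faces X i. Z s * (F s)^2) * (\<Sum>s\<in>faces X i. Z s * (G s)^2)" .
  have "(\<Sum>s\<in>faces X i. Z s * (F s * G s))^2 / (real (d choose i))^2 \<le> (\<Sum>s\<in>faces X i. Z s * (F s)^2) * (\<Sum>s\<in>faces X i. Z s * (G s)^2) / (real (d choose i))^2"
    by (rule divide_right_mono[OF h]) simp
  then show ?thesis unfolding Ex_def by (simp add: power_divide power2_eq_square)
qed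

lemma Dn_const: assumes "r \<in> faces X i" "i < d" shows "Dn i (\<lambda>_. c) r = c"
  using count[OF faces_X[OF assms(1)]] Z_pos[OF faces_X[OF assms(1)]] assms(2) faces_card[OF assms(1)]
  unfolding Dn_def by (simp add: sum_distrib_right[symmetric])

lemma Ex_const: assumes "i \<le> d" shows "Ex i (\<lambda>_. c) = c"
  using assms
proof (induction i)
  case 0
  have "faces X 0 = {{}}"
  proof -
    have "faces X d \<noteq> {}" using psum by auto
    then obtain t where "t \<in> faces X d" by blast
    then have "{} \<in> X" using down by (auto simp: faces_mem)
    then show ?thesis using fin_mem by (auto simp: faces_mem)
  qed
  then show ?case unfolding Ex_def using Z_empty by simp
next
  case (Suc i)
  then have "Ex (Suc i) (\<lambda>_. c) = Ex i (Dn i (\<lambda>_. c))" by (intro tower) simp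
  also have "\<dots> = Ex i (\<lambda>_. c)" using Suc.prems by (intro Ex_cong Dn_const) auto
  finally show ?case using Suc by simp
qed

lemma sq_sum: fixes f :: "'b \<Rightarrow> real" assumes "finite A"
  shows "(\<Sum>a\<in>A. f a)^2 = (\<Sum>a\<in>A. (f a)^2) + (\<Sum>a\<in>A. \<Sum>b\<in>A - {a}. f a * f b)"
proof -
  have "(\<Sum>a\<in>A. f a)^2 = (\<Sum>a\<in>A. \<Sum>b\<in>A. f a * f b)"
    unfolding power2_eq_square by (rule sum_product)
  also have "\<dots> = (\<Sum>a\<in>A. (f a)^2 + (\<Sum>b\<in>A - {a}. f a * f b))"
    using assms by (intro sum.cong refl) (simp add: sum.remove power2_eq_square)
  finally show ?thesis by (simp add: sum.distrib)
qed

lemma upsq: assumes "Suc (Suc i) \<le> d"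
  shows "(\<Sum>s\<in>faces X (Suc (Suc i)). Z s * (\<Sum>a\<in>s. H (s - {a}))^2)
    = real (d - Suc i) * (\<Sum>q\<in>faces X (Suc i). Z q * (H q)^2)
      + (\<Sum>r\<in>faces X i. \<Sum>b\<in>Vx r. \<Sum>a\<in>Vx r - {b}. Z (insert a (insert b r)) * H (insert b r) * H (insert a r))"
proof -
  let ?S2 = "faces X (Suc (Suc i))"
  have "(\<Sum>s\<in>?S2. Z s * (\<Sum>a\<in>s. H (s - {a}))^2)
      = (\<Sum>s\<in>?S2. \<Sum>a\<in>s. Z s * (H (s - {a}))^2) + (\<Sum>s\<in>?S2. \<Sum>a\<in>s. \<Sum>b\<in>s - {a}. Z s * H (s - {a}) * H (s - {b}))"
    by (simp add: sq_sum faces_fin algebra_simps sum.distrib sum_distrib_left)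
  also have "(\<Sum>s\<in>?S2. \<Sum>a\<in>s. Z s * (H (s - {a}))^2)
      = (\<Sum>s\<in>?S2. \<Sum>a\<in>s. (\<lambda>q a. Z (insert a q) * (H q)^2) (s - {a}) a)"
    by (intro sum.cong refl) (simp add: insert_absorb)
  also have "\<dots> = (\<Sum>q\<in>faces X (Suc i). \<Sum>a\<in>Vx q. Z (insert a q) * (H q)^2)"
    by (rule regroup)
  also have "\<dots> = real (d - Suc i) * (\<Sum>q\<in>faces X (Suc i). Z q * (H q)^2)"
    by (simp add: sum_distrib_left sum_distrib_right[symmetric] count faces_X faces_card mult.assoc)
  also have "(\<Sum>s\<in>?S2. \<Sum>a\<in>s. \<Sum>b\<in>s - {a}. Z s * H (s - {a}) * H (s - {b}))
      = (\<Sum>s\<in>?S2. \<Sum>a\<in>s. (\<lambda>q a. \<Sum>b\<in>q. Z (insert a q) * H q * H (insert a q - {b})) (s - {a}) a)"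
    by (intro sum.cong refl) (simp add: insert_absorb)
  also have "\<dots> = (\<Sum>q\<in>faces X (Suc i). \<Sum>a\<in>Vx q. \<Sum>b\<in>q. Z (insert a q) * H q * H (insert a q - {b}))"
    by (rule regroup)
  also have "\<dots> = (\<Sum>q\<in>faces X (Suc i). \<Sum>b\<in>q. \<Sum>a\<in>Vx q. Z (insert a q) * H q * H (insert a q - {b}))"
    by (intro sum.cong refl sum.swap)
  also have "\<dots> = (\<Sum>q\<in>faces X (Suc i). \<Sum>b\<in>q. (\<lambda>r b. \<Sum>a\<in>Vx (insert b r). Z (insert a (insert b r)) * H (insert b r) * H (insert a r)) (q - {b}) b)"
  proof (rule sum.cong[OF refl], rule sum.cong[OF refl])
    fix q b assume qf: "q \<in> faces X (Suc i)" and "b \<in> q"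
    then have qb: "insert b (q - {b}) = q" by auto
    have "insert a q - {b} = insert a (q - {b})" if "a \<in> Vx q" for a
      using that \<open>b \<in> q\<close> unfolding Vx_def by auto
    then show "(\<Sum>a\<in>Vx q. Z (insert a q) * H q * H (insert a q - {b}))
      = (\<lambda>r b. \<Sum>a\<in>Vx (insert b r). Z (insert a (insert b r)) * H (insert b r) * H (insert a r)) (q - {b}) b"
      using \<open>b \<in> q\<close> by (simp add: insert_absorb)
  qed
  also have "\<dots> = (\<Sum>r\<in>faces X i. \<Sum>b\<in>Vx r. \<Sum>a\<in>Vx (insert b r). Z (insert a (insert b r)) * H (insert b r) * H (insert a r))"
    by (rule regroup)
  also have "\<dots> = (\<Sum>r\<in>faces X i. \<Sum>b\<in>Vx r. \<Sum>a\<in>Vx r - {b}. Z (insert a (insert b r)) * H (insert b r) * H (insert a r))"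
  proof (rule sum.cong[OF refl], rule sum.cong[OF refl])
    fix r b assume r: "r \<in> faces X i" and b: "b \<in> Vx r"
    show "(\<Sum>a\<in>Vx (insert b r). Z (insert a (insert b r)) * H (insert b r) * H (insert a r))
      = (\<Sum>a\<in>Vx r - {b}. Z (insert a (insert b r)) * H (insert b r) * H (insert a r))"
    proof (rule sum.mono_neutral_left)
      show "finite (Vx r - {b})" using fin_Vx by simp
      show "Vx (insert b r) \<subseteq> Vx r - {b}"
        unfolding Vx_def using down by (auto simp: insert_commute) (metis insert_commute subset_insertI)
      show "\<forall>a\<in>Vx r - {b} - Vx (insert b r). Z (insert a (insert b r)) * H (insert b r) * H (insert a r) = 0"
        using b unfolding Vx_def by (auto dest: Z_nz)
    qed
  qed
  finally show ?thesis .
qed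


lemma Up_sum: "(\<Sum>s\<in>faces X (Suc (Suc i)). Z s * (Up (Suc i) H s)^2)
   = (\<Sum>s\<in>faces X (Suc (Suc i)). Z s * (\<Sum>a\<in>s. H (s - {a}))^2) / (real (Suc (Suc i)))^2"
  unfolding Up_def power_divide times_divide_eq_right by (rule sum_divide_distrib[symmetric])

lemma regroup_back: "(\<Sum>r\<in>faces X i. \<Sum>a\<in>Vx r. F (insert a r)) = real (Suc i) * (\<Sum>q\<in>faces X (Suc i). F q)"
proof -
  have "(\<Sum>r\<in>faces X i. \<Sum>a\<in>Vx r. F (insert a r)) = (\<Sum>q\<in>faces X (Suc i). \<Sum>a\<in>q. F (insert a (q - {a})))"
    by (rule regroup[symmetric])
  also have "\<dots> = (\<Sum>q\<in>faces X (Suc i). real (Suc i) * F q)"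
    by (intro sum.cong refl) (simp add: insert_absorb faces_card)
  finally show ?thesis by (simp add: sum_distrib_left)
qed

lemma sum_lin2: fixes f g :: "'b \<Rightarrow> real" shows "(\<Sum>x\<in>A. c * (a * f x + b * (e * g x))) = c * (a * sum f A + b * e * sum g A)"
proof -
  have "(\<Sum>x\<in>A. c * (a * f x + b * (e * g x))) = (\<Sum>x\<in>A. (c * a) * f x + (c * b * e) * g x)"
    by (intro sum.cong refl) (simp add: algebra_simps)
  also have "\<dots> = (c * a) * sum f A + (c * b * e) * sum g A"
    by (simp add: sum.distrib sum_distrib_left)
  finally show ?thesis by (simp add: distrib_left mult.assoc)
qed

lemma field_step:
  fixes a b n m c W1 W0 g :: real
  assumes "a > 0" "b > 0" "n > 0" "c > 0" "m > 0"
  shows "(a * W1 + a * (g * (n * W1) + (1 - g) * b * W0)) / (m^2 * (a * c / m))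
    = W1 / c / m + n / m * (g * (W1 / c) + (1 - g) * (W0 / (n * c / b)))"
  using assms by (simp add: field_simps power2_eq_square)

lemma garland_sum:
  assumes d: "Suc (Suc i) \<le> d"
  and G: "\<And>r. r \<in> faces X i \<Longrightarrow> (\<Sum>b\<in>Vx r. \<Sum>a\<in>Vx r - {b}. Z (insert a (insert b r)) * H (insert b r) * H (insert a r))
        \<le> real (d - Suc i) * (\<gamma> * (\<Sum>a\<in>Vx r. Z (insert a r) * (H (insert a r))^2)
            + (1 - \<gamma>) * (\<Sum>a\<in>Vx r. Z (insert a r) * H (insert a r))^2 / (real (d - i) * Z r))"
  shows "Ex (Suc (Suc i)) (\<lambda>s. (Up (Suc i) H s)^2) \<le> Ex (Suc i) (\<lambda>q. (H q)^2) / real (Suc (Suc i))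
     + real (Suc i) / real (Suc (Suc i)) * (\<gamma> * Ex (Suc i) (\<lambda>q. (H q)^2) + (1 - \<gamma>) * Ex i (\<lambda>r. (Dn i H r)^2))"
proof -
  define W1 where "W1 = (\<Sum>q\<in>faces X (Suc i). Z q * (H q)^2)"
  define W0 where "W0 = (\<Sum>r\<in>faces X i. Z r * (Dn i H r)^2)"
  define P where "P = (\<Sum>r\<in>faces X i. \<Sum>b\<in>Vx r. \<Sum>a\<in>Vx r - {b}. Z (insert a (insert b r)) * H (insert b r) * H (insert a r))"
  define c0 where "c0 = real (d choose i)"
  define c1 where "c1 = real (d choose Suc i)"
  define c2 where "c2 = real (d choose Suc (Suc i))"
  have c0: "c0 > 0" and c1: "c1 > 0" and c2: "c2 > 0" using d by (auto simp: c0_def c1_def c2_def)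
  have r1: "real (Suc i) * c1 = real (d - i) * c0" unfolding c0_def c1_def by (rule binom_rel)
  have r2: "real (Suc (Suc i)) * c2 = real (d - Suc i) * c1" unfolding c2_def c1_def by (rule binom_rel)
  have A: "(\<Sum>r\<in>faces X i. \<Sum>a\<in>Vx r. Z (insert a r) * (H (insert a r))^2) = real (Suc i) * W1"
    unfolding W1_def by (rule regroup_back)
  have B: "(\<Sum>a\<in>Vx r. Z (insert a r) * H (insert a r))^2 / (real (d - i) * Z r) = real (d - i) * (Z r * (Dn i H r)^2)"
    if "r \<in> faces X i" for r
  proof -
    have "Z r > 0" using Z_pos[OF faces_X[OF that]] .
    moreover have "real (d - i) > 0" using d by simp
    moreover have e: "(\<Sum>a\<in>Vx r. Z (insert a r) * H (insert a r)) = real (d - i) * Z r * Dn i H r"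
      using d by (intro Dn_sum[OF that]) simp
    ultimately show ?thesis unfolding e by (simp add: power2_eq_square field_simps)
  qed
  have B2: "(1 - \<gamma>) * (\<Sum>a\<in>Vx r. Z (insert a r) * H (insert a r))^2 / (real (d - i) * Z r) = (1 - \<gamma>) * (real (d - i) * (Z r * (Dn i H r)^2))"
    if "r \<in> faces X i" for r
    unfolding times_divide_eq_right[symmetric] B[OF that] ..
  have "P \<le> (\<Sum>r\<in>faces X i. real (d - Suc i) * (\<gamma> * (\<Sum>a\<in>Vx r. Z (insert a r) * (H (insert a r))^2)
            + (1 - \<gamma>) * (\<Sum>a\<in>Vx r. Z (insert a r) * H (insert a r))^2 / (real (d - i) * Z r)))"
    unfolding P_def by (intro sum_mono G)
  also have "\<dots> = (\<Sum>r\<in>faces X i. real (d - Suc i) * (\<gamma> * (\<Sum>a\<in>Vx r. Z (insert a r) * (H (insert a r))^2)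
            + (1 - \<gamma>) * (real (d - i) * (Z r * (Dn i H r)^2))))"
    by (intro sum.cong refl) (simp only: B2)
  also have "\<dots> = real (d - Suc i) * (\<gamma> * (real (Suc i) * W1) + (1 - \<gamma>) * real (d - i) * W0)"
    unfolding A[symmetric] W0_def by (rule sum_lin2)
  finally have P: "P \<le> real (d - Suc i) * (\<gamma> * (real (Suc i) * W1) + (1 - \<gamma>) * real (d - i) * W0)" .
  have "Ex (Suc (Suc i)) (\<lambda>s. (Up (Suc i) H s)^2) = (real (d - Suc i) * W1 + P) / ((real (Suc (Suc i)))^2 * c2)"
    unfolding Ex_def Up_sum upsq[OF d] W1_def P_def c2_def by (simp only: divide_divide_eq_left)
  also have "\<dots> \<le> (real (d - Suc i) * W1 + real (d - Suc i) * (\<gamma> * (real (Suc i) * W1) + (1 - \<gamma>) * real (d - i) * W0)) / ((real (Suc (Suc i)))^2 * c2)"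
    by (rule divide_right_mono[OF add_left_mono[OF P]]) (use c2 in simp)
  also have "\<dots> = W1 / c1 / real (Suc (Suc i)) + real (Suc i) / real (Suc (Suc i)) * (\<gamma> * (W1 / c1) + (1 - \<gamma>) * (W0 / c0))"
  proof -
    have e2: "c2 = real (d - Suc i) * c1 / real (Suc (Suc i))" using r2 by (simp add: field_simps)
    have e0: "c0 = real (Suc i) * c1 / real (d - i)" using r1 d by (simp add: field_simps)
    have pos: "real (d - Suc i) > 0" "real (d - i) > 0" using d by auto
    show ?thesis unfolding e2 e0 using pos c1 by (intro field_step) auto
  qed
  also have "\<dots> = Ex (Suc i) (\<lambda>q. (H q)^2) / real (Suc (Suc i))
     + real (Suc i) / real (Suc (Suc i)) * (\<gamma> * Ex (Suc i) (\<lambda>q. (H q)^2) + (1 - \<gamma>) * Ex i (\<lambda>r. (Dn i H r)^2))"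
    unfolding Ex_def W1_def W0_def c0_def c1_def by (rule refl)
  finally show ?thesis .
qed

end

context cplx
begin

lemma Z_filter: "(\<Sum>r'\<in>{r' \<in> faces X d. r \<subseteq> r'}. p r') = Z r"
  unfolding Z_def by (simp only: sum.inter_filter[OF fin_faces])

lemma gv_link: "graph_vertices (link_cx X r) = Vx r"
  unfolding graph_vertices_def link_cx_def Vx_def
proof (intro set_eqI iffI; simp)
  fix v assume "\<exists>t. {v} = t - r \<and> t \<in> X \<and> r \<subseteq> t"
  then obtain t where t: "{v} = t - r" "t \<in> X" "r \<subseteq> t" by blast
  then have "t = insert v r" by blast
  then show "v \<notin> r \<and> insert v r \<in> X" using t by blast
next
  fix v assume "v \<notin> r \<and> insert v r \<in> X"
  then show "\<exists>t. {v} = t - r \<and> t \<in> X \<and> r \<subseteq> t"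
    by (intro exI[of _ "insert v r"]) auto
qed

lemma link_sum:
  assumes r: "r \<in> faces X i" and u: "u \<in> Vx r" and v: "v \<in> Vx r"
  shows "(\<Sum>t\<in>{t \<in> faces (link_cx X r) (d - i). {u, v} \<subseteq> t}. p (r \<union> t)) = Z (insert u (insert v r))"
proof -
  have ri: "card r = i" "finite r" "r \<in> X" using r by (auto simp: faces_mem fin_mem)
  have il: "i \<le> d" using card_le[OF ri(3)] ri(1) by simp
  let ?A = "{\<sigma> \<in> faces X d. insert u (insert v r) \<subseteq> \<sigma>}"
  let ?B = "{t \<in> faces (link_cx X r) (d - i). {u, v} \<subseteq> t}"
  have ur: "u \<notin> r" and vr: "v \<notin> r" using u v unfolding Vx_def by auto
  have bij: "bij_betw (\<lambda>\<sigma>. \<sigma> - r) ?A ?B"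
  proof (rule bij_betw_imageI)
    show "inj_on (\<lambda>\<sigma>. \<sigma> - r) ?A"
    proof (rule inj_onI)
      fix x y assume "x \<in> ?A" "y \<in> ?A" "x - r = y - r"
      then show "x = y" by blast
    qed
    show "(\<lambda>\<sigma>. \<sigma> - r) ` ?A = ?B"
    proof
      show "(\<lambda>\<sigma>. \<sigma> - r) ` ?A \<subseteq> ?B"
      proof (rule subsetI)
        fix x assume "x \<in> (\<lambda>\<sigma>. \<sigma> - r) ` ?A"
        then obtain \<sigma> where s: "\<sigma> \<in> faces X d" "insert u (insert v r) \<subseteq> \<sigma>" and x: "x = \<sigma> - r" by blast
        have fs: "finite \<sigma>" "\<sigma> \<in> X" "card \<sigma> = d" using s by (auto simp: faces_mem fin_mem)
        have "\<sigma> - r \<in> link_cx X r" unfolding link_cx_def using s fs by blast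
        moreover have "card (\<sigma> - r) = d - i" using s fs ri by (simp add: card_Diff_subset)
        moreover have "{u, v} \<subseteq> \<sigma> - r" using s ur vr by blast
        ultimately show "x \<in> ?B" using x by (simp add: faces_def)
      qed
      show "?B \<subseteq> (\<lambda>\<sigma>. \<sigma> - r) ` ?A"
      proof
        fix t assume t: "t \<in> ?B"
        then obtain \<sigma> where s: "t = \<sigma> - r" "\<sigma> \<in> X" "r \<subseteq> \<sigma>" and ct: "card t = d - i" and uv: "{u, v} \<subseteq> t"
          unfolding link_cx_def by (auto simp: faces_def)
        have "finite \<sigma>" using s fin_mem by simp
        then have "card \<sigma> = d" using ct s ri il card_Diff_subset[of r \<sigma>] card_mono[of \<sigma> r] by simp
        then have "\<sigma> \<in> ?A" using s uv by (auto simp: faces_mem)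
        then show "t \<in> (\<lambda>\<sigma>. \<sigma> - r) ` ?A" using s by blast
      qed
    qed
  qed
  have "(\<Sum>t\<in>?B. p (r \<union> t)) = (\<Sum>\<sigma>\<in>?A. p (r \<union> (\<sigma> - r)))"
    by (rule sum.reindex_bij_betw[OF bij, symmetric])
  also have "\<dots> = (\<Sum>\<sigma>\<in>?A. p \<sigma>)"
    by (intro sum.cong refl) (simp add: Un_Diff_cancel Un_absorb1 insert_subset)
  also have "\<dots> = Z (insert u (insert v r))" by (rule Z_filter)
  finally show ?thesis .
qed

definition Wr :: "'a set \<Rightarrow> 'a \<Rightarrow> 'a \<Rightarrow> real" where
  "Wr r a b = (if a \<noteq> b then Z (insert a (insert b r)) else 0)"

lemma Wr_sym: "Wr r a b = Wr r b a" unfolding Wr_def by (simp add: insert_commute)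

lemma Vx_ins: assumes "a \<in> Vx r" shows "Vx (insert a r) \<subseteq> Vx r - {a}"
  using assms down unfolding Vx_def by (auto simp: insert_commute) (metis insert_commute subset_insertI)

lemma Wr_row: assumes r: "r \<in> faces X i" and a: "a \<in> Vx r"
  shows "(\<Sum>b\<in>Vx r. Wr r a b) = real (d - Suc i) * Z (insert a r)"
proof -
  have "(\<Sum>b\<in>Vx r. Wr r a b) = (\<Sum>b\<in>Vx r - {a}. Z (insert b (insert a r)))"
  proof -
    have "(\<Sum>b\<in>Vx r. Wr r a b) = Wr r a a + (\<Sum>b\<in>Vx r - {a}. Wr r a b)"
      using fin_Vx a by (simp add: sum.remove)
    also have "\<dots> = (\<Sum>b\<in>Vx r - {a}. Wr r a b)" by (simp add: Wr_def)
    also have "\<dots> = (\<Sum>b\<in>Vx r - {a}. Z (insert b (insert a r)))"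
      unfolding Wr_def by (intro sum.cong refl) (auto simp: insert_commute)
    finally show ?thesis .
  qed
  also have "\<dots> = (\<Sum>b\<in>Vx (insert a r). Z (insert b (insert a r)))"
  proof (rule sum.mono_neutral_right)
    show "finite (Vx r - {a})" using fin_Vx by simp
    show "Vx (insert a r) \<subseteq> Vx r - {a}" by (rule Vx_ins[OF a])
    show "\<forall>b\<in>Vx r - {a} - Vx (insert a r). Z (insert b (insert a r)) = 0"
      using a unfolding Vx_def by (auto dest: Z_nz)
  qed
  also have "\<dots> = real (d - card (insert a r)) * Z (insert a r)"
    using a by (intro count) (simp add: Vx_def)
  also have "card (insert a r) = Suc i" using a r unfolding Vx_def by (auto simp: faces_mem fin_mem)
  finally show ?thesis .
qed

lemma ew_link:
  assumes r: "r \<in> faces X i" and u: "u \<in> Vx r" and v: "v \<in> Vx r"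
  shows "edge_weight (link_cx X r) (d - i) (link_dist X d p r) u v = Wr r u v / (Z r * real ((d - i) choose 2))"
proof (cases "u = v")
  case True then show ?thesis unfolding edge_weight_def Wr_def by simp
next
  case False
  show ?thesis
  proof (cases "{u, v} \<in> link_cx X r")
    case True
    have "face_dist (link_cx X r) (d - i) (link_dist X d p r) 2 {u, v}
        = (\<Sum>t\<in>{t \<in> faces (link_cx X r) (d - i). {u, v} \<subseteq> t}. p (r \<union> t) / Z r) / real ((d - i) choose 2)"
      unfolding face_dist_def link_dist_def Z_filter by simp
    also have "\<dots> = Z (insert u (insert v r)) / (Z r * real ((d - i) choose 2))"
      unfolding sum_divide_distrib[symmetric] link_sum[OF r u v] by simp
    finally show ?thesis unfolding edge_weight_def Wr_def using True False by simp
  next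
    case nl: False
    have "Z (insert u (insert v r)) = 0"
    proof (rule ccontr)
      assume "Z (insert u (insert v r)) \<noteq> 0"
      then have "insert u (insert v r) \<in> X" by (rule Z_nz)
      moreover have "{u, v} = insert u (insert v r) - r" using u v unfolding Vx_def by auto
      ultimately have "{u, v} \<in> link_cx X r" unfolding link_cx_def by blast
      then show False using nl by simp
    qed
    then show ?thesis unfolding edge_weight_def Wr_def using nl False by simp
  qed
qed

lemma nadj_link:
  assumes r: "r \<in> faces X i" and d: "Suc (Suc i) \<le> d" and a: "a \<in> Vx r"
  shows "norm_adj (link_cx X r) (d - i) (link_dist X d p r) f a
     = (\<Sum>b\<in>Vx r. Wr r a b * f b) / (real (d - Suc i) * Z (insert a r))"
proof -
  define C where "C = Z r * real ((d - i) choose 2)"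
  have Cp: "C > 0" unfolding C_def using Z_pos[OF faces_X[OF r]] d by simp
  have "norm_adj (link_cx X r) (d - i) (link_dist X d p r) f a
      = (\<Sum>b\<in>Vx r. Wr r a b / C * f b) / (\<Sum>b\<in>Vx r. Wr r a b / C)"
    unfolding norm_adj_def gv_link C_def using ew_link[OF r a] by simp
  also have "\<dots> = (\<Sum>b\<in>Vx r. Wr r a b * f b) / (\<Sum>b\<in>Vx r. Wr r a b)"
    using Cp by (simp add: sum_divide_distrib[symmetric])
  also have "\<dots> = (\<Sum>b\<in>Vx r. Wr r a b * f b) / (real (d - Suc i) * Z (insert a r))"
    by (simp add: Wr_row[OF r a])
  finally show ?thesis .
qed

lemma Vx_zpos: "a \<in> Vx r \<Longrightarrow> Z (insert a r) > 0"
  unfolding Vx_def by (intro Z_pos) simp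

lemma garland_core:
  assumes r: "r \<in> faces X i" and d: "Suc (Suc i) \<le> d"
    and expd: "one_sided_expander (link_cx X r) (d - i) (link_dist X d p r) lam" and lam1: "lam < 1"
    and S0: "(\<Sum>a\<in>Vx r. Z (insert a r) * h a) = 0"
  shows "(\<Sum>a\<in>Vx r. \<Sum>b\<in>Vx r. Wr r a b * h a * h b) \<le> real (d - Suc i) * lam * (\<Sum>a\<in>Vx r. Z (insert a r) * (h a)^2)"
proof (rule ccontr)
  let ?V = "Vx r"
  let ?z = "\<lambda>a. Z (insert a r)"
  define \<kappa> where "\<kappa> = real (d - Suc i)"
  have kp: "\<kappa> > 0" unfolding \<kappa>_def using d by simp
  assume "\<not> ?thesis"
  then have "(\<Sum>a\<in>?V. \<Sum>b\<in>?V. Wr r a b * h a * h b) > (\<kappa> * lam) * (\<Sum>a\<in>?V. ?z a * (h a)^2)"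
    unfolding \<kappa>_def by simp
  from rayleigh_max[OF fin_Vx Vx_zpos Wr_sym _ S0 this, of \<kappa>] Wr_row[OF r]
  obtain x \<mu> where Sx: "(\<Sum>a\<in>?V. ?z a * x a) = 0" and nz: "\<exists>a\<in>?V. x a \<noteq> 0" and mu: "\<mu> > \<kappa> * lam"
    and eig: "\<forall>a\<in>?V. (\<Sum>b\<in>?V. Wr r a b * x b) = \<mu> * ?z a * x a"
    unfolding \<kappa>_def by blast
  let ?Y = "link_cx X r" and ?q = "link_dist X d p r" and ?j = "d - i"
  have e1: "is_eigvec ?Y ?j ?q x (\<mu> / \<kappa>)"
    unfolding is_eigvec_def gv_link
  proof
    show "\<forall>u\<in>?V. norm_adj ?Y ?j ?q x u = \<mu> / \<kappa> * x u"
    proof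
      fix u assume u: "u \<in> ?V"
      have "norm_adj ?Y ?j ?q x u = (\<mu> * ?z u * x u) / (\<kappa> * ?z u)"
        unfolding nadj_link[OF r d u] \<kappa>_def using eig u by simp
      also have "\<dots> = \<mu> / \<kappa> * x u" using Vx_zpos[OF u] kp by simp
      finally show "norm_adj ?Y ?j ?q x u = \<mu> / \<kappa> * x u" .
    qed
    show "\<exists>u\<in>?V. x u \<noteq> 0" by (rule nz)
  qed
  have e2: "is_eigvec ?Y ?j ?q (\<lambda>_. 1) 1"
    unfolding is_eigvec_def gv_link
  proof
    show "\<forall>u\<in>?V. norm_adj ?Y ?j ?q (\<lambda>_. 1) u = 1 * 1"
    proof
      fix u assume u: "u \<in> ?V"
      show "norm_adj ?Y ?j ?q (\<lambda>_. 1) u = 1 * 1"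
        unfolding nadj_link[OF r d u] using Wr_row[OF r u] Vx_zpos[OF u] d by simp
    qed
    show "\<exists>u\<in>?V. (1::real) \<noteq> 0" using nz by auto
  qed
  have li: "lin_indep2_on (graph_vertices ?Y) x (\<lambda>_. 1)"
    unfolding lin_indep2_on_def gv_link
  proof (intro allI impI)
    fix \<alpha> \<beta> :: real assume h: "\<forall>u\<in>?V. \<alpha> * x u + \<beta> * 1 = 0"
    have "0 = (\<Sum>u\<in>?V. ?z u * (\<alpha> * x u + \<beta> * 1))" using h by simp
    also have "\<dots> = \<alpha> * (\<Sum>u\<in>?V. ?z u * x u) + \<beta> * (\<Sum>u\<in>?V. ?z u)"
      by (simp add: sum.distrib sum_distrib_left algebra_simps)
    finally have "\<beta> * (\<Sum>u\<in>?V. ?z u) = 0" using Sx by simp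
    moreover have "(\<Sum>u\<in>?V. ?z u) > 0"
    proof -
      obtain u where "u \<in> ?V" using nz by blast
      then show ?thesis using fin_Vx Vx_zpos by (intro sum_pos) auto
    qed
    ultimately have b0: "\<beta> = 0" by simp
    obtain u where u: "u \<in> ?V" "x u \<noteq> 0" using nz by blast
    then have "\<alpha> = 0" using h b0 by auto
    then show "\<alpha> = 0 \<and> \<beta> = 0" using b0 by simp
  qed
  have "\<mu> / \<kappa> > lam" using mu kp by (simp add: field_simps)
  then show False using expd e1 e2 li lam1 unfolding one_sided_expander_def by blast
qed

lemma garland_vertex:
  assumes r: "r \<in> faces X i" and d: "Suc (Suc i) \<le> d"
    and expd: "one_sided_expander (link_cx X r) (d - i) (link_dist X d p r) lam" and lam1: "lam < 1"
  shows "(\<Sum>b\<in>Vx r. \<Sum>a\<in>Vx r - {b}. Z (insert a (insert b r)) * h b * h a)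
     \<le> real (d - Suc i) * (lam * (\<Sum>a\<in>Vx r. Z (insert a r) * (h a)^2)
        + (1 - lam) * (\<Sum>a\<in>Vx r. Z (insert a r) * h a)^2 / (real (d - i) * Z r))"
proof -
  let ?V = "Vx r"
  let ?z = "\<lambda>a. Z (insert a r)"
  define \<kappa> where "\<kappa> = real (d - Suc i)"
  define T where "T = (\<Sum>a\<in>?V. ?z a)"
  define Q where "Q h = (\<Sum>a\<in>?V. \<Sum>b\<in>?V. Wr r a b * h a * h b)" for h :: "'a \<Rightarrow> real"
  define S where "S h = (\<Sum>a\<in>?V. ?z a * h a)" for h :: "'a \<Rightarrow> real"
  define N where "N h = (\<Sum>a\<in>?V. ?z a * (h a)^2)" for h :: "'a \<Rightarrow> real"
  have rX: "r \<in> X" and cr: "card r = i" using r by (auto simp: faces_mem)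
  have T: "T = real (d - i) * Z r" unfolding T_def using count[OF rX] cr by simp
  have Tp: "T > 0" unfolding T using Z_pos[OF rX] d by simp
  have row: "(\<Sum>b\<in>?V. Wr r a b) = \<kappa> * ?z a" if "a \<in> ?V" for a
    unfolding \<kappa>_def by (rule Wr_row[OF r that])
  have lhs: "(\<Sum>b\<in>?V. \<Sum>a\<in>?V - {b}. Z (insert a (insert b r)) * h b * h a) = Q h"
  proof -
    have "(\<Sum>a\<in>?V - {b}. Z (insert a (insert b r)) * h b * h a) = (\<Sum>a\<in>?V. Wr r b a * h b * h a)"
      if "b \<in> ?V" for b
    proof -
      have "(\<Sum>a\<in>?V. Wr r b a * h b * h a) = Wr r b b * h b * h b + (\<Sum>a\<in>?V - {b}. Wr r b a * h b * h a)"
        using fin_Vx that by (simp add: sum.remove)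
      also have "\<dots> = (\<Sum>a\<in>?V - {b}. Wr r b a * h b * h a)" by (simp add: Wr_def)
      also have "\<dots> = (\<Sum>a\<in>?V - {b}. Z (insert a (insert b r)) * h b * h a)"
        unfolding Wr_def by (intro sum.cong refl) (auto simp: insert_commute)
      finally show ?thesis by simp
    qed
    then show ?thesis unfolding Q_def by simp
  qed
  define c where "c = S h / T"
  define h0 where "h0 a = h a - c" for a
  have S0: "S h0 = 0"
  proof -
    have "S h0 = S h - c * T" unfolding S_def h0_def T_def
      by (simp add: algebra_simps sum_subtractf sum_distrib_left)
    then show ?thesis unfolding c_def using Tp by simp
  qed
  have core: "Q h0 \<le> \<kappa> * lam * N h0"
    unfolding Q_def N_def \<kappa>_def
    by (rule garland_core[OF r d expd lam1]) (use S0 in \<open>simp add: S_def\<close>)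
  have hh: "h a = h0 a + c" for a unfolding h0_def by simp
  have Qexp: "Q h = Q h0 + c^2 * \<kappa> * T"
  proof -
    have "Q h = (\<Sum>a\<in>?V. \<Sum>b\<in>?V. Wr r a b * h0 a * h0 b + c * (Wr r a b * h0 a) + c * (Wr r a b * h0 b) + c^2 * Wr r a b)"
      unfolding Q_def hh by (intro sum.cong refl) (simp add: algebra_simps power2_eq_square)
    also have "\<dots> = Q h0 + c * (\<Sum>a\<in>?V. \<Sum>b\<in>?V. Wr r a b * h0 a) + c * (\<Sum>a\<in>?V. \<Sum>b\<in>?V. Wr r a b * h0 b) + c^2 * (\<Sum>a\<in>?V. \<Sum>b\<in>?V. Wr r a b)"
      unfolding Q_def by (simp add: sum.distrib sum_distrib_left)
    also have "(\<Sum>a\<in>?V. \<Sum>b\<in>?V. Wr r a b * h0 a) = \<kappa> * S h0"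
    proof -
      have "(\<Sum>a\<in>?V. \<Sum>b\<in>?V. Wr r a b * h0 a) = (\<Sum>a\<in>?V. h0 a * (\<Sum>b\<in>?V. Wr r a b))"
        by (simp add: sum_distrib_left sum_distrib_right mult.commute)
      also have "\<dots> = (\<Sum>a\<in>?V. \<kappa> * (?z a * h0 a))" by (intro sum.cong refl) (simp add: row)
      finally show ?thesis unfolding S_def by (simp add: sum_distrib_left)
    qed
    also have "(\<Sum>a\<in>?V. \<Sum>b\<in>?V. Wr r a b * h0 b) = \<kappa> * S h0"
    proof -
      have "(\<Sum>a\<in>?V. \<Sum>b\<in>?V. Wr r a b * h0 b) = (\<Sum>b\<in>?V. \<Sum>a\<in>?V. Wr r a b * h0 b)" by (rule sum.swap)
      also have "\<dots> = (\<Sum>b\<in>?V. h0 b * (\<Sum>a\<in>?V. Wr r b a))"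
        by (simp add: sum_distrib_left Wr_sym mult.commute)
      also have "\<dots> = (\<Sum>b\<in>?V. \<kappa> * (?z b * h0 b))" by (intro sum.cong refl) (simp add: row)
      finally show ?thesis unfolding S_def by (simp add: sum_distrib_left)
    qed
    also have "(\<Sum>a\<in>?V. \<Sum>b\<in>?V. Wr r a b) = \<kappa> * T"
      unfolding T_def by (simp add: row sum_distrib_left)
    finally show ?thesis using S0 by simp
  qed
  have Nexp: "N h = N h0 + c^2 * T"
  proof -
    have "N h = (\<Sum>a\<in>?V. ?z a * (h0 a)^2 + 2 * c * (?z a * h0 a) + c^2 * ?z a)"
      unfolding N_def hh by (intro sum.cong refl) (simp add: algebra_simps power2_eq_square)
    also have "\<dots> = N h0 + 2 * c * S h0 + c^2 * T"
      unfolding N_def S_def T_def by (simp add: sum.distrib sum_distrib_left)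
    finally show ?thesis using S0 by simp
  qed
  have "Q h \<le> \<kappa> * (lam * N h + (1 - lam) * (c^2 * T))"
    using core Qexp Nexp by (simp add: algebra_simps)
  also have "c^2 * T = (S h)^2 / T" unfolding c_def using Tp by (simp add: power2_eq_square)
  finally have "Q h \<le> \<kappa> * (lam * N h + (1 - lam) * ((S h)^2 / T))" .
  then show ?thesis unfolding lhs \<kappa>_def N_def S_def T[symmetric] T_def by simp
qed

end

context cplx
begin

lemma faces0: "faces X 0 = {{}}"
proof -
  have "faces X d \<noteq> {}" using psum by auto
  then obtain t where "t \<in> faces X d" by blast
  then have "{} \<in> X" using down by (auto simp: faces_mem)
  then show ?thesis using fin_mem by (auto simp: faces_mem)
qed

lemma Ex0: "Ex 0 G = G {}"
  unfolding Ex_def faces0 using Z_empty by simp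

lemma Dn_diff_const: assumes "r \<in> faces X i" "i < d"
  shows "Dn i (\<lambda>s. F s - c) r = Dn i F r - c"
proof -
  have "Dn i (\<lambda>s. F s - c) r = Dn i F r - Dn i (\<lambda>_. c) r"
    unfolding Dn_def by (simp add: algebra_simps sum_subtractf diff_divide_distrib)
  then show ?thesis using Dn_const[OF assms] by simp
qed

lemma contr_alg:
  fixes n g y :: real
  assumes "n > 0"
  shows "1 / (n + 1) + n / (n + 1) * (g + (1 - g) * (1 - y / n)) = 1 - (1 - g) * y / (n + 1)"
proof -
  have n1: "n + 1 \<noteq> 0" using assms by simp
  have "n * (g + (1 - g) * (1 - y / n)) = n - (1 - g) * y" using assms by (simp add: field_simps)
  then have "1 / (n + 1) + n / (n + 1) * (g + (1 - g) * (1 - y / n)) = (1 + (n - (1 - g) * y)) / (n + 1)"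
    by (simp add: add_divide_distrib)
  also have "\<dots> = 1 - (1 - g) * y / (n + 1)" using n1 by (simp add: field_simps)
  finally show ?thesis .
qed

lemma contr_alg2:
  fixes n g y V :: real
  shows "V / (n + 1) + n / (n + 1) * (g * V + (1 - g) * ((1 - y / n) * V)) = (1 / (n + 1) + n / (n + 1) * (g + (1 - g) * (1 - y / n))) * V"
  by (simp only: ring_distribs mult_ac) simp

lemma contraction:
  assumes m: "m \<le> d" and g0: "0 \<le> \<gamma>" and g1: "\<gamma> \<le> 1"
    and GH: "\<And>i r h. Suc (Suc i) \<le> m \<Longrightarrow> r \<in> faces X i \<Longrightarrow>
        (\<Sum>b\<in>Vx r. \<Sum>a\<in>Vx r - {b}. Z (insert a (insert b r)) * h b * h a)
        \<le> real (d - Suc i) * (\<gamma> * (\<Sum>a\<in>Vx r. Z (insert a r) * (h a)^2)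
            + (1 - \<gamma>) * (\<Sum>a\<in>Vx r. Z (insert a r) * h a)^2 / (real (d - i) * Z r))"
  shows "Suc i \<le> m \<Longrightarrow> Ex (Suc i) F = 0 \<Longrightarrow>
    Ex i (\<lambda>r. (Dn i F r)^2) \<le> (1 - (1 - \<gamma>)^i / real (Suc i)) * Ex (Suc i) (\<lambda>s. (F s)^2)"
proof (induction i arbitrary: F)
  case 0
  have "Ex (Suc 0) F = Ex 0 (Dn 0 F)" using 0 m by (intro tower) simp
  then have "Dn 0 F {} = 0" using 0 by (simp add: Ex0)
  then show ?case by (simp add: Ex0)
next
  case (Suc i)
  have d2: "Suc (Suc i) \<le> d" using Suc.prems m by simp
  define H where "H = Dn (Suc i) F"
  define V where "V = Ex (Suc i) (\<lambda>q. (H q)^2)"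
  define EF where "EF = Ex (Suc (Suc i)) (\<lambda>s. (F s)^2)"
  have mH: "Ex (Suc i) H = 0" unfolding H_def using tower[of "Suc i" F] d2 Suc.prems by simp
  have V_eq: "V = Ex (Suc (Suc i)) (\<lambda>s. F s * Up (Suc i) H s)"
  proof -
    have "V = Ex (Suc i) (\<lambda>r. Dn (Suc i) F r * H r)" unfolding V_def H_def by (simp add: power2_eq_square)
    also have "\<dots> = Ex (Suc (Suc i)) (\<lambda>s. F s * Up (Suc i) H s)" using pairing[of "Suc i" F H] d2 by simp
    finally show ?thesis .
  qed
  have CS: "V^2 \<le> EF * Ex (Suc (Suc i)) (\<lambda>s. (Up (Suc i) H s)^2)"
    unfolding V_eq EF_def by (rule Ex_CS)
  have GS: "Ex (Suc (Suc i)) (\<lambda>s. (Up (Suc i) H s)^2) \<le> V / real (Suc (Suc i))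
     + real (Suc i) / real (Suc (Suc i)) * (\<gamma> * V + (1 - \<gamma>) * Ex i (\<lambda>r. (Dn i H r)^2))"
    unfolding V_def
    by (rule garland_sum[OF d2]) (rule GH[of i _ "\<lambda>a. H (insert a _)", simplified], use Suc.prems in auto)
  have IH: "Ex i (\<lambda>r. (Dn i H r)^2) \<le> (1 - (1 - \<gamma>)^i / real (Suc i)) * V"
    unfolding V_def using Suc.IH[of H] Suc.prems mH by simp
  define a where "a = 1 - (1 - \<gamma>)^(Suc i) / real (Suc (Suc i))"
  have UpB: "Ex (Suc (Suc i)) (\<lambda>s. (Up (Suc i) H s)^2) \<le> a * V"
  proof -
    have "(1 - \<gamma>) * Ex i (\<lambda>r. (Dn i H r)^2) \<le> (1 - \<gamma>) * ((1 - (1 - \<gamma>)^i / real (Suc i)) * V)"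
      using IH g1 by (intro mult_left_mono) auto
    then have "Ex (Suc (Suc i)) (\<lambda>s. (Up (Suc i) H s)^2) \<le> V / real (Suc (Suc i))
     + real (Suc i) / real (Suc (Suc i)) * (\<gamma> * V + (1 - \<gamma>) * ((1 - (1 - \<gamma>)^i / real (Suc i)) * V))"
      using GS by (smt (verit, best) divide_nonneg_nonneg mult_left_mono of_nat_0_le_iff)
    also have "\<dots> = (1 / (real (Suc i) + 1) + real (Suc i) / (real (Suc i) + 1) * (\<gamma> + (1 - \<gamma>) * (1 - (1 - \<gamma>)^i / real (Suc i)))) * V"
      unfolding contr_alg2[symmetric] by (simp only: of_nat_Suc[of "Suc i"] add.commute)
    also have "\<dots> = (1 - (1 - \<gamma>) * (1 - \<gamma>)^i / (real (Suc i) + 1)) * V"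
      using contr_alg[of "real (Suc i)" \<gamma> "(1 - \<gamma>)^i"] by simp
    also have "\<dots> = a * V" unfolding a_def by (simp add: add.commute)
    finally show ?thesis .
  qed
  have V0: "V \<ge> 0" unfolding V_def by (intro Ex_nonneg) simp
  have EF0: "EF \<ge> 0" unfolding EF_def by (intro Ex_nonneg) simp
  have a0: "a \<ge> 0"
  proof -
    have "(1 - \<gamma>)^(Suc i) \<le> 1" using g0 g1 by (intro power_le_one) auto
    then show ?thesis unfolding a_def by (simp add: field_simps)
  qed
  have "V^2 \<le> EF * (a * V)" using CS UpB EF0 by (meson mult_left_mono order_trans)
  then have "V \<le> a * EF"
  proof (cases "V = 0")
    case True then show ?thesis using a0 EF0 by simp
  next
    case False
    then have "V > 0" using V0 by simp
    moreover assume "V^2 \<le> EF * (a * V)"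
    ultimately show ?thesis by (simp add: power2_eq_square mult.commute mult.left_commute)
  qed
  then show ?case unfolding V_def EF_def a_def H_def by simp
qed

end

lemma exp_quad_bound:
  fixes x :: real assumes "\<bar>x\<bar> \<le> 1" shows "exp x \<le> 1 + x + x^2"
proof (cases "x \<ge> 0")
  case True then show ?thesis using exp_bound[of x] assms by simp
next
  case False
  define u where "u = -x"
  have u: "0 < u" "u \<le> 1" using False assms by (auto simp: u_def)
  have e: "exp u \<ge> 1 + u" by simp
  have "exp x = 1 / exp u" by (simp add: u_def exp_minus field_simps)
  also have "\<dots> \<le> 1 / (1 + u)" using e u by (intro divide_left_mono) auto
  finally have "exp x \<le> 1 / (1 + u)" .
  also have "1 / (1 + u) \<le> 1 - u + u^2"
  proof -
    have "1 \<le> (1 - u + u^2) * (1 + u)" using u by (simp add: algebra_simps power2_eq_square power3_eq_cube)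
    then show ?thesis using u by (simp add: field_simps)
  qed
  finally show ?thesis by (simp add: u_def)
qed

lemma exp_diff_sq:
  fixes x y :: real
  shows "(exp x - exp y)^2 \<le> (x - y)^2 * (exp (2 * x) + exp (2 * y))"
proof -
  have key: "(exp x - exp y)^2 \<le> (x - y)^2 * exp (2 * x)" if "y \<le> x" for x y :: real
  proof -
    have "1 + (y - x) \<le> exp (y - x)" by simp
    then have "1 - exp (y - x) \<le> x - y" by linarith
    then have "exp x * (1 - exp (y - x)) \<le> exp x * (x - y)" by (intro mult_left_mono) auto
    then have a: "exp x - exp y \<le> exp x * (x - y)" by (simp add: exp_diff algebra_simps)
    have b: "0 \<le> exp x - exp y" using that by simp
    have "(exp x - exp y)^2 \<le> (exp x * (x - y))^2" using a b by (intro power_mono) auto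
    also have "\<dots> = (x - y)^2 * (exp x)^2" by (simp add: power_mult_distrib mult.commute)
    also have "(exp x)^2 = exp (2 * x)" by (simp add: exp_double)
    finally show ?thesis .
  qed
  show ?thesis
  proof (cases "y \<le> x")
    case True
    have "(x - y)^2 * exp (2 * x) \<le> (x - y)^2 * (exp (2 * x) + exp (2 * y))"
      by (intro mult_left_mono) auto
    then show ?thesis using key[OF True] by linarith
  next
    case False
    then have k: "(exp y - exp x)^2 \<le> (y - x)^2 * exp (2 * y)" using key[of x y] by simp
    have m: "(y - x)^2 * exp (2 * y) \<le> (y - x)^2 * (exp (2 * x) + exp (2 * y))"
      by (intro mult_left_mono) auto
    have "(exp x - exp y)^2 = (exp y - exp x)^2" by (simp add: power2_commute)
    also have "\<dots> \<le> (y - x)^2 * (exp (2 * x) + exp (2 * y))" using k m by linarith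
    also have "(y - x)^2 = (x - y)^2" by (simp add: power2_commute)
    finally show ?thesis .
  qed
qed

lemma inv_one_minus_le_exp:
  fixes x :: real assumes "0 \<le> x" "x \<le> 1/2" shows "1 / (1 - x) \<le> exp (2 * x)"
proof -
  have "- x - 2 * x^2 \<le> ln (1 - x)" by (rule ln_one_minus_pos_lower_bound[OF assms])
  moreover have "-2 * x \<le> - x - 2 * x^2"
  proof -
    have "(2 * x) * x \<le> 1 * x" using assms by (intro mult_right_mono) auto
    then show ?thesis by (simp add: power2_eq_square)
  qed
  ultimately have "-2 * x \<le> ln (1 - x)" by simp
  then have "exp (-2 * x) \<le> exp (ln (1 - x))" by simp
  also have "exp (ln (1 - x)) = 1 - x" using assms by simp
  finally have e: "exp (-2 * x) \<le> 1 - x" .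
  have "exp (2 * x) = 1 / exp (-2 * x)" by (simp add: exp_minus field_simps)
  also have "1 / (1 - x) \<le> 1 / exp (-2 * x)" using e assms by (intro divide_left_mono) auto
  ultimately show ?thesis by simp
qed

lemma GM_iter:
  fixes \<Lambda> :: "real \<Rightarrow> real" and \<kappa> :: real
  assumes rec: "\<And>t. \<Lambda> t * (1 - \<kappa> * t^2) \<le> (\<Lambda> (t / 2))^2"
    and nn: "\<And>t. \<Lambda> t \<ge> 0" and k0: "\<kappa> \<ge> 0"
  shows "\<kappa> * t^2 \<le> 1/2 \<Longrightarrow> \<Lambda> t \<le> exp (4 * \<kappa> * t^2) * (\<Lambda> (t / 2^n))^(2^n)"
proof (induction n arbitrary: t)
  case 0
  have "exp (4 * \<kappa> * t^2) \<ge> 1" using k0 by simp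
  then have "1 * \<Lambda> t \<le> exp (4 * \<kappa> * t^2) * \<Lambda> t" using nn[of t] by (intro mult_right_mono) auto
  then show ?case by simp
next
  case (Suc n)
  have one: "\<Lambda> t \<le> exp (2 * (\<kappa> * t^2)) * (\<Lambda> (t / 2))^2"
  proof -
    have pos: "1 - \<kappa> * t^2 > 0" using Suc.prems by simp
    have "\<Lambda> t \<le> (\<Lambda> (t / 2))^2 / (1 - \<kappa> * t^2)" using rec[of t] pos by (simp add: field_simps)
    also have "\<dots> = (\<Lambda> (t / 2))^2 * (1 / (1 - \<kappa> * t^2))" by simp
    also have "\<dots> \<le> (\<Lambda> (t / 2))^2 * exp (2 * (\<kappa> * t^2))"
      using inv_one_minus_le_exp[of "\<kappa> * t^2"] Suc.prems k0 by (intro mult_left_mono) auto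
    finally show ?thesis by (simp add: mult.commute)
  qed
  have h2: "\<kappa> * (t / 2)^2 \<le> 1/2"
  proof -
    have "\<kappa> * (t / 2)^2 = (\<kappa> * t^2) / 4" by (simp add: power_divide)
    moreover have "\<kappa> * t^2 \<ge> 0" using k0 by simp
    ultimately show ?thesis using Suc.prems by linarith
  qed
  have IH: "\<Lambda> (t / 2) \<le> exp (4 * \<kappa> * (t / 2)^2) * (\<Lambda> (t / 2 / 2^n))^(2^n)" using Suc.IH[OF h2] .
  have "(\<Lambda> (t / 2))^2 \<le> (exp (4 * \<kappa> * (t / 2)^2) * (\<Lambda> (t / 2 / 2^n))^(2^n))^2"
    using IH nn by (intro power_mono) auto
  also have "\<dots> = exp (2 * (\<kappa> * t^2)) * (\<Lambda> (t / 2^Suc n))^(2^Suc n)"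
  proof -
    have p: "t / 2 / 2^n = t / 2^Suc n" by simp
    have q: "4 * \<kappa> * (t / 2)^2 = \<kappa> * t^2" by (simp add: power_divide)
    have "(exp (\<kappa> * t^2) * (\<Lambda> (t / 2^Suc n))^(2^n))^2 = (exp (\<kappa> * t^2))^2 * ((\<Lambda> (t / 2^Suc n))^(2^n))^2"
      by (simp add: power_mult_distrib)
    also have "(exp (\<kappa> * t^2))^2 = exp (2 * (\<kappa> * t^2))" by (simp add: exp_double)
    also have "((\<Lambda> (t / 2^Suc n))^(2^n))^2 = (\<Lambda> (t / 2^Suc n))^(2^Suc n)"
      by (simp add: power_mult[symmetric] mult.commute)
    finally show ?thesis unfolding p q .
  qed
  finally have "(\<Lambda> (t / 2))^2 \<le> exp (2 * (\<kappa> * t^2)) * (\<Lambda> (t / 2^Suc n))^(2^Suc n)" .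
  then have "\<Lambda> t \<le> exp (2 * (\<kappa> * t^2)) * (exp (2 * (\<kappa> * t^2)) * (\<Lambda> (t / 2^Suc n))^(2^Suc n))"
    using one by (meson exp_ge_zero mult_left_mono order_trans)
  also have "\<dots> = exp (4 * \<kappa> * t^2) * (\<Lambda> (t / 2^Suc n))^(2^Suc n)"
    by (simp add: exp_add[symmetric] mult.assoc[symmetric])
  finally show ?case .
qed

lemma var_pair:
  fixes w h :: "'b \<Rightarrow> real"
  assumes "(\<Sum>a\<in>V. w a) = 1"
  shows "(\<Sum>a\<in>V. w a * (h a)^2) - (\<Sum>a\<in>V. w a * h a)^2 = (\<Sum>a\<in>V. \<Sum>b\<in>V. w a * w b * (h a - h b)^2) / 2"
proof -
  have "(\<Sum>a\<in>V. \<Sum>b\<in>V. w a * w b * (h a - h b)^2)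
      = (\<Sum>a\<in>V. \<Sum>b\<in>V. (w a * (h a)^2) * w b + w a * (w b * (h b)^2) - 2 * ((w a * h a) * (w b * h b)))"
    by (intro sum.cong refl) (simp add: power2_eq_square algebra_simps)
  also have "\<dots> = (\<Sum>a\<in>V. \<Sum>b\<in>V. (w a * (h a)^2) * w b) + (\<Sum>a\<in>V. \<Sum>b\<in>V. w a * (w b * (h b)^2)) - 2 * (\<Sum>a\<in>V. \<Sum>b\<in>V. (w a * h a) * (w b * h b))"
    by (simp only: sum.distrib sum_subtractf sum_distrib_left[symmetric])
  also have "(\<Sum>a\<in>V. \<Sum>b\<in>V. (w a * (h a)^2) * w b) = (\<Sum>a\<in>V. w a * (h a)^2) * (\<Sum>b\<in>V. w b)"
    by (rule sum_product[symmetric])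
  also have "(\<Sum>a\<in>V. \<Sum>b\<in>V. w a * (w b * (h b)^2)) = (\<Sum>a\<in>V. w a) * (\<Sum>b\<in>V. w b * (h b)^2)"
    by (rule sum_product[symmetric])
  also have "(\<Sum>a\<in>V. \<Sum>b\<in>V. (w a * h a) * (w b * h b)) = (\<Sum>a\<in>V. w a * h a) * (\<Sum>b\<in>V. w b * h b)"
    by (rule sum_product[symmetric])
  finally show ?thesis using assms by (simp add: power2_eq_square)
qed

lemma var_bound:
  fixes w h e :: "'b \<Rightarrow> real"
  assumes "(\<Sum>a\<in>V. w a) = 1" "\<And>a. a \<in> V \<Longrightarrow> w a \<ge> 0"
    and "\<And>a b. a \<in> V \<Longrightarrow> b \<in> V \<Longrightarrow> (h a - h b)^2 \<le> K * (e a + e b)"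
  shows "(\<Sum>a\<in>V. w a * (h a)^2) - (\<Sum>a\<in>V. w a * h a)^2 \<le> K * (\<Sum>a\<in>V. w a * e a)"
proof -
  have "(\<Sum>a\<in>V. \<Sum>b\<in>V. w a * w b * (h a - h b)^2) \<le> (\<Sum>a\<in>V. \<Sum>b\<in>V. w a * w b * (K * (e a + e b)))"
    using assms(2,3) by (intro sum_mono mult_left_mono) auto
  also have "\<dots> = K * ((\<Sum>a\<in>V. w a * e a) * (\<Sum>b\<in>V. w b) + (\<Sum>a\<in>V. w a) * (\<Sum>b\<in>V. w b * e b))"
  proof -
    have "(\<Sum>a\<in>V. \<Sum>b\<in>V. w a * w b * (K * (e a + e b))) = K * (\<Sum>a\<in>V. \<Sum>b\<in>V. (w a * e a) * w b + w a * (w b * e b))"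
      by (simp add: sum_distrib_left algebra_simps)
    also have "\<dots> = K * ((\<Sum>a\<in>V. \<Sum>b\<in>V. (w a * e a) * w b) + (\<Sum>a\<in>V. \<Sum>b\<in>V. w a * (w b * e b)))"
      by (simp only: sum.distrib)
    finally show ?thesis by (simp only: sum_product[symmetric])
  qed
  also have "\<dots> = 2 * K * (\<Sum>a\<in>V. w a * e a)" using assms(1) by simp
  finally show ?thesis unfolding var_pair[OF assms(1)] by simp
qed


context cplx
begin

lemma Dn_nu: assumes "r \<in> faces X n" "n < d"
  shows "Dn n F r = (\<Sum>a\<in>Vx r. (Z (insert a r) / (real (d - n) * Z r)) * F (insert a r))"
  unfolding Dn_def by (simp add: sum_divide_distrib)

lemma nu_sum: assumes r: "r \<in> faces X n" and "n < d"
  shows "(\<Sum>a\<in>Vx r. Z (insert a r) / (real (d - n) * Z r)) = 1"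
proof -
  have "(\<Sum>a\<in>Vx r. Z (insert a r) / (real (d - n) * Z r)) = (\<Sum>a\<in>Vx r. Z (insert a r)) / (real (d - n) * Z r)"
    by (simp add: sum_divide_distrib)
  also have "\<dots> = 1" using count[OF faces_X[OF r]] faces_card[OF r] Z_pos[OF faces_X[OF r]] assms(2) by simp
  finally show ?thesis .
qed

lemma locvar: assumes r: "r \<in> faces X n" and nd: "n < d"
  and hyp: "\<And>a b. a \<in> Vx r \<Longrightarrow> b \<in> Vx r \<Longrightarrow> (h (insert a r) - h (insert b r))^2 \<le> K * (e (insert a r) + e (insert b r))"
  shows "Dn n (\<lambda>s. (h s)^2) r - (Dn n h r)^2 \<le> K * Dn n e r"
  unfolding Dn_nu[OF r nd]
  by (rule var_bound[OF nu_sum[OF r nd]]) (use Z_nonneg hyp in auto)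

lemma poincare:
  assumes m: "Suc n \<le> d" and g0: "0 \<le> \<gamma>" and g1: "\<gamma> \<le> 1"
    and GH: "\<And>i r h. Suc (Suc i) \<le> Suc n \<Longrightarrow> r \<in> faces X i \<Longrightarrow>
        (\<Sum>b\<in>Vx r. \<Sum>a\<in>Vx r - {b}. Z (insert a (insert b r)) * h b * h a)
        \<le> real (d - Suc i) * (\<gamma> * (\<Sum>a\<in>Vx r. Z (insert a r) * (h a)^2)
            + (1 - \<gamma>) * (\<Sum>a\<in>Vx r. Z (insert a r) * h a)^2 / (real (d - i) * Z r))"
  shows "(1 - \<gamma>)^n / real (Suc n) * (Ex (Suc n) (\<lambda>s. (F s)^2) - (Ex (Suc n) F)^2)
     \<le> Ex (Suc n) (\<lambda>s. (F s)^2) - Ex n (\<lambda>r. (Dn n F r)^2)"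
proof -
  define \<mu> where "\<mu> = Ex (Suc n) F"
  define F' where "F' s = F s - \<mu>" for s
  have nd: "n < d" using m by simp
  have mF': "Ex (Suc n) F' = 0" unfolding F'_def \<mu>_def Ex_diff Ex_const[OF m] by simp
  have C: "Ex n (\<lambda>r. (Dn n F' r)^2) \<le> (1 - (1 - \<gamma>)^n / real (Suc n)) * Ex (Suc n) (\<lambda>s. (F' s)^2)"
    by (rule contraction[OF m g0 g1 GH _ mF']) auto
  have sq: "Ex i (\<lambda>s. (H s - c)^2) = Ex i (\<lambda>s. (H s)^2) - 2 * c * Ex i H + c^2" if "i \<le> d" for i H c
  proof -
    have "Ex i (\<lambda>s. (H s - c)^2) = Ex i (\<lambda>s. ((H s)^2 + c^2) - 2 * c * H s)"
      by (rule Ex_cong) (simp add: power2_eq_square algebra_simps)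
    also have "\<dots> = Ex i (\<lambda>s. (H s)^2) + c^2 - 2 * c * Ex i H"
      unfolding Ex_diff Ex_add Ex_cmult Ex_const[OF that] ..
    finally show ?thesis by simp
  qed
  have DnF': "Ex n (\<lambda>r. (Dn n F' r)^2) = Ex n (\<lambda>r. (Dn n F r - \<mu>)^2)"
    unfolding F'_def by (rule Ex_cong) (simp add: Dn_diff_const[OF _ nd])
  have mDn: "Ex n (Dn n F) = \<mu>" unfolding \<mu>_def using tower[OF nd] by simp
  have E1: "Ex n (\<lambda>r. (Dn n F' r)^2) = Ex n (\<lambda>r. (Dn n F r)^2) - \<mu>^2"
    unfolding DnF' sq[OF less_imp_le[OF nd]] mDn by (simp add: power2_eq_square)
  have E2: "Ex (Suc n) (\<lambda>s. (F' s)^2) = Ex (Suc n) (\<lambda>s. (F s)^2) - \<mu>^2"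
    unfolding F'_def sq[OF m] \<mu>_def by (simp add: power2_eq_square)
  define y where "y = (1 - \<gamma>)^n / real (Suc n)"
  from C have "Ex n (\<lambda>r. (Dn n F r)^2) - \<mu>^2 \<le> (1 - y) * (Ex (Suc n) (\<lambda>s. (F s)^2) - \<mu>^2)"
    unfolding E1 E2 y_def .
  then show ?thesis unfolding y_def[symmetric] \<mu>_def[symmetric] by (simp add: algebra_simps)
qed

lemma Lambda_rec:
  assumes m: "Suc n \<le> d" and g0: "0 \<le> \<gamma>" and g1: "\<gamma> < 1"
    and GH: "\<And>i r h. Suc (Suc i) \<le> Suc n \<Longrightarrow> r \<in> faces X i \<Longrightarrow>
        (\<Sum>b\<in>Vx r. \<Sum>a\<in>Vx r - {b}. Z (insert a (insert b r)) * h b * h a)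
        \<le> real (d - Suc i) * (\<gamma> * (\<Sum>a\<in>Vx r. Z (insert a r) * (h a)^2)
            + (1 - \<gamma>) * (\<Sum>a\<in>Vx r. Z (insert a r) * h a)^2 / (real (d - i) * Z r))"
    and Lip: "\<And>r a b. r \<in> faces X n \<Longrightarrow> a \<in> Vx r \<Longrightarrow> b \<in> Vx r \<Longrightarrow> \<bar>G (insert a r) - G (insert b r)\<bar> \<le> L"
  shows "Ex (Suc n) (\<lambda>s. exp (t * G s)) * (1 - real (Suc n) / (1 - \<gamma>)^n * L^2 / 4 * t^2)
     \<le> (Ex (Suc n) (\<lambda>s. exp (t / 2 * G s)))^2"
proof -
  have nd: "n < d" using m by simp
  define F where "F s = exp (t / 2 * G s)" for s
  define E where "E s = exp (t * G s)" for s
  define K where "K = t^2 * L^2 / 4"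
  define c where "c = (1 - \<gamma>)^n / real (Suc n)"
  have cp: "c > 0" unfolding c_def using g1 by simp
  have FE: "(F s)^2 = E s" for s unfolding F_def E_def by (simp add: exp_double[symmetric])
  have P: "c * (Ex (Suc n) (\<lambda>s. (F s)^2) - (Ex (Suc n) F)^2) \<le> Ex (Suc n) (\<lambda>s. (F s)^2) - Ex n (\<lambda>r. (Dn n F r)^2)"
    unfolding c_def by (rule poincare[OF m g0 less_imp_le[OF g1] GH])
  have "Ex (Suc n) (\<lambda>s. (F s)^2) - Ex n (\<lambda>r. (Dn n F r)^2) = Ex n (\<lambda>r. Dn n (\<lambda>s. (F s)^2) r - (Dn n F r)^2)"
    unfolding Ex_diff tower[OF nd] ..
  also have "\<dots> \<le> Ex n (\<lambda>r. K * Dn n E r)"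
  proof (rule Ex_mono, rule locvar[OF _ nd])
    fix r a b assume r: "r \<in> faces X n" and a: "a \<in> Vx r" and b: "b \<in> Vx r"
    have "(F (insert a r) - F (insert b r))^2 \<le> (t / 2 * G (insert a r) - t / 2 * G (insert b r))^2
        * (exp (2 * (t / 2 * G (insert a r))) + exp (2 * (t / 2 * G (insert b r))))"
      unfolding F_def by (rule exp_diff_sq)
    also have "\<dots> = (t / 2)^2 * (G (insert a r) - G (insert b r))^2 * (E (insert a r) + E (insert b r))"
      unfolding E_def by (simp add: power2_eq_square algebra_simps)
    also have "\<dots> \<le> (t / 2)^2 * L^2 * (E (insert a r) + E (insert b r))"
    proof -
      have "(G (insert a r) - G (insert b r))^2 \<le> L^2"
        using Lip[OF r a b] by (simp add: abs_le_square_iff[symmetric] power2_le_iff_abs_le)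
      then show ?thesis unfolding E_def by (intro mult_right_mono mult_left_mono) auto
    qed
    also have "\<dots> = K * (E (insert a r) + E (insert b r))" unfolding K_def by (simp add: power_divide)
    finally show "(F (insert a r) - F (insert b r))^2 \<le> K * (E (insert a r) + E (insert b r))" .
  qed
  also have "\<dots> = K * Ex (Suc n) E" unfolding Ex_cmult tower[OF nd] ..
  finally have "c * (Ex (Suc n) E - (Ex (Suc n) F)^2) \<le> K * Ex (Suc n) E"
    using P unfolding FE by simp
  then have "Ex (Suc n) E - (Ex (Suc n) F)^2 \<le> (K / c) * Ex (Suc n) E"
    using cp by (simp add: field_simps)
  moreover have "K / c = real (Suc n) / (1 - \<gamma>)^n * L^2 / 4 * t^2"
    unfolding K_def c_def by (simp add: field_simps)
  ultimately show ?thesis unfolding E_def F_def by (simp add: algebra_simps)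
qed

lemma Lambda_small:
  assumes "i \<le> d" "\<bar>s\<bar> \<le> 1" "\<And>x. x \<in> faces X i \<Longrightarrow> \<bar>G x\<bar> \<le> 1" "Ex i G = 0"
  shows "Ex i (\<lambda>x. exp (s * G x)) \<le> 1 + s^2"
proof -
  have "Ex i (\<lambda>x. exp (s * G x)) \<le> Ex i (\<lambda>x. 1 + s * G x + s^2)"
  proof (rule Ex_mono)
    fix x assume x: "x \<in> faces X i"
    have a: "\<bar>s * G x\<bar> \<le> 1" using assms(2) assms(3)[OF x] by (simp add: abs_mult mult_le_one)
    have "(s * G x)^2 \<le> s^2"
    proof -
      have "(G x)^2 \<le> 1" using assms(3)[OF x] abs_le_square_iff[of "G x" 1] by simp
      then show ?thesis by (simp add: power_mult_distrib mult_left_le)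
    qed
    then show "exp (s * G x) \<le> 1 + s * G x + s^2" using exp_quad_bound[OF a] by simp
  qed
  also have "\<dots> = 1 + s^2" unfolding Ex_add Ex_cmult Ex_const[OF assms(1)] assms(4) by simp
  finally show ?thesis .
qed

lemma GM_final:
  assumes m: "Suc n \<le> d" and g0: "0 \<le> \<gamma>" and g1: "\<gamma> < 1"
    and GH: "\<And>i r h. Suc (Suc i) \<le> Suc n \<Longrightarrow> r \<in> faces X i \<Longrightarrow>
        (\<Sum>b\<in>Vx r. \<Sum>a\<in>Vx r - {b}. Z (insert a (insert b r)) * h b * h a)
        \<le> real (d - Suc i) * (\<gamma> * (\<Sum>a\<in>Vx r. Z (insert a r) * (h a)^2)
            + (1 - \<gamma>) * (\<Sum>a\<in>Vx r. Z (insert a r) * h a)^2 / (real (d - i) * Z r))"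
    and Lip: "\<And>r a b. r \<in> faces X n \<Longrightarrow> a \<in> Vx r \<Longrightarrow> b \<in> Vx r \<Longrightarrow> \<bar>G (insert a r) - G (insert b r)\<bar> \<le> L"
    and mean: "Ex (Suc n) G = 0" and bnd: "\<And>x. x \<in> faces X (Suc n) \<Longrightarrow> \<bar>G x\<bar> \<le> 1"
    and t0: "t \<ge> 0" and kt: "real (Suc n) / (1 - \<gamma>)^n * L^2 / 4 * t^2 \<le> 1/16"
  shows "Ex (Suc n) (\<lambda>s. exp (t * G s)) \<le> exp (1/2)"
proof -
  define \<kappa> where "\<kappa> = real (Suc n) / (1 - \<gamma>)^n * L^2 / 4"
  define \<Lambda> where "\<Lambda> t = Ex (Suc n) (\<lambda>s. exp (t * G s))" for t
  have rec: "\<Lambda> t * (1 - \<kappa> * t^2) \<le> (\<Lambda> (t / 2))^2" for t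
    unfolding \<Lambda>_def \<kappa>_def using Lambda_rec[where G=G and L=L and t=t, OF m g0 g1 GH Lip] by (simp add: mult.assoc)
  have nn: "\<Lambda> t \<ge> 0" for t unfolding \<Lambda>_def by (intro Ex_nonneg) simp
  have k0: "\<kappa> \<ge> 0" unfolding \<kappa>_def using g1 by simp
  have kt': "\<kappa> * t^2 \<le> 1/16" using kt unfolding \<kappa>_def by simp
  obtain N where N: "4 * t^2 + 1 < 2^N" using real_arch_pow[of "2::real" "4 * t^2 + 1"] by auto
  have it: "\<Lambda> t \<le> exp (4 * \<kappa> * t^2) * (\<Lambda> (t / 2^N))^(2^N)"
    by (rule GM_iter[OF rec nn k0]) (use kt' in simp)
  define s where "s = t / 2^N"
  have tN: "t < 2^N"
  proof -
    have "t \<le> 4 * t^2 + 1"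
    proof (cases "t \<le> 1")
      case True then show ?thesis using t0 by (simp add: add_increasing)
    next
      case False
      then have "t * 1 \<le> t * t" by (intro mult_left_mono) auto
      then show ?thesis using mult_nonneg_nonneg[OF t0 t0] unfolding power2_eq_square by linarith
    qed
    then show ?thesis using N by simp
  qed
  have s01: "\<bar>s\<bar> \<le> 1" unfolding s_def using t0 tN by simp
  have Ls: "\<Lambda> s \<le> 1 + s^2" unfolding \<Lambda>_def by (rule Lambda_small[OF m s01 bnd mean])
  have "(\<Lambda> s)^(2^N) \<le> (1 + s^2)^(2^N)" using Ls nn by (intro power_mono) auto
  also have "\<dots> \<le> (exp (s^2))^(2^N)" by (intro power_mono) auto
  also have "\<dots> = exp (real (2^N) * s^2)" by (rule exp_of_nat_mult[symmetric])
  also have "real (2^N) * s^2 = t^2 / 2^N" unfolding s_def by (simp add: power_divide power2_eq_square)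
  also have "t^2 / 2^N \<le> 1/4" using N by (simp add: field_simps)
  finally have L2: "(\<Lambda> s)^(2^N) \<le> exp (1/4)" by simp
  have "\<Lambda> t \<le> exp (4 * \<kappa> * t^2) * exp (1/4)"
    using it L2 unfolding s_def by (meson exp_ge_zero mult_left_mono order_trans)
  also have "\<dots> \<le> exp (1/4) * exp (1/4)" using kt' by (intro mult_right_mono) auto
  also have "\<dots> = exp (1/2)" by (simp add: exp_add[symmetric])
  finally show ?thesis unfolding \<Lambda>_def .
qed

end

context cplx
begin

lemma lift_Up: assumes i: "1 \<le> i" and s: "s \<in> faces X (Suc i)"
  shows "lift (Suc i) g s = Up i (lift i g) s"
proof -
  have fs: "finite s" and cs: "card s = Suc i" using s by (auto simp: faces_mem fin_mem)
  define S where "S = (\<Sum>v\<in>s. g v)"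
  have "(\<Sum>a\<in>s. lift i g (s - {a})) = (\<Sum>a\<in>s. (S - g a) / real i)"
    unfolding lift_def S_def using fs by (intro sum.cong refl) (simp add: sum_diff1)
  also have "\<dots> = (real (card s) * S - S) / real i"
    by (simp add: sum_divide_distrib[symmetric] sum_subtractf S_def)
  also have "\<dots> = S" using cs i by (simp add: field_simps)
  finally show ?thesis unfolding Up_def lift_def S_def by simp
qed

lemma Up_jensen: assumes s: "s \<in> faces X (Suc i)"
  shows "exp (t * (Up i H s - \<mu>)) \<le> Up i (\<lambda>q. exp (t * (H q - \<mu>))) s"
proof -
  have fs: "finite s" and cs: "card s = Suc i" using s by (auto simp: faces_mem fin_mem)
  have ne: "s \<noteq> {}" using cs by auto
  have "exp (\<Sum>a\<in>s. (1 / real (Suc i)) *\<^sub>R (t * (H (s - {a}) - \<mu>)))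
      \<le> (\<Sum>a\<in>s. (1 / real (Suc i)) * exp (t * (H (s - {a}) - \<mu>)))"
    by (rule convex_on_sum[OF fs ne exp_convex]) (auto simp: cs)
  moreover have "(\<Sum>a\<in>s. (1 / real (Suc i)) *\<^sub>R (t * (H (s - {a}) - \<mu>))) = t * (Up i H s - \<mu>)"
  proof -
    have "(\<Sum>a\<in>s. (1 / real (Suc i)) *\<^sub>R (t * (H (s - {a}) - \<mu>))) = (t / real (Suc i)) * (\<Sum>a\<in>s. (H (s - {a}) - \<mu>))"
      by (simp add: sum_distrib_left)
    also have "(\<Sum>a\<in>s. (H (s - {a}) - \<mu>)) = (\<Sum>a\<in>s. H (s - {a})) - real (Suc i) * \<mu>"
      by (simp add: sum_subtractf cs)
    also have "t / real (Suc i) * ((\<Sum>a\<in>s. H (s - {a})) - real (Suc i) * \<mu>) = t * (Up i H s - \<mu>)"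
      unfolding Up_def by (simp add: field_simps)
    finally show ?thesis .
  qed
  moreover have "(\<Sum>a\<in>s. (1 / real (Suc i)) * exp (t * (H (s - {a}) - \<mu>))) = Up i (\<lambda>q. exp (t * (H q - \<mu>))) s"
    unfolding Up_def by (simp add: sum_divide_distrib)
  ultimately show ?thesis by simp
qed

lemma Ex_Up: assumes "i < d" shows "Ex (Suc i) (Up i H) = Ex i H"
proof -
  have "Ex (Suc i) (Up i H) = Ex (Suc i) (\<lambda>s. 1 * Up i H s)" by simp
  also have "\<dots> = Ex i (\<lambda>r. Dn i (\<lambda>_. 1) r * H r)" by (rule pairing[OF assms])
  also have "\<dots> = Ex i H" by (rule Ex_cong) (simp add: Dn_const[OF _ assms])
  finally show ?thesis .
qed

lemma jensen_step: assumes "1 \<le> i" "Suc i \<le> d"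
  shows "Ex (Suc i) (\<lambda>s. exp (t * (lift (Suc i) g s - \<mu>))) \<le> Ex i (\<lambda>s. exp (t * (lift i g s - \<mu>)))"
proof -
  have "Ex (Suc i) (\<lambda>s. exp (t * (lift (Suc i) g s - \<mu>))) \<le> Ex (Suc i) (Up i (\<lambda>q. exp (t * (lift i g q - \<mu>))))"
    by (rule Ex_mono) (simp add: lift_Up[OF assms(1)] Up_jensen)
  also have "\<dots> = Ex i (\<lambda>s. exp (t * (lift i g s - \<mu>)))" using assms by (intro Ex_Up) simp
  finally show ?thesis .
qed

lemma jensen: assumes "1 \<le> m" "m \<le> k" "k \<le> d"
  shows "Ex k (\<lambda>s. exp (t * (lift k g s - \<mu>))) \<le> Ex m (\<lambda>s. exp (t * (lift m g s - \<mu>)))"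
  using assms(2,3)
proof (induction k rule: dec_induct)
  case base then show ?case by simp
next
  case (step k)
  have "Ex (Suc k) (\<lambda>s. exp (t * (lift (Suc k) g s - \<mu>))) \<le> Ex k (\<lambda>s. exp (t * (lift k g s - \<mu>)))"
    using step assms(1) by (intro jensen_step) auto
  also have "\<dots> \<le> Ex m (\<lambda>s. exp (t * (lift m g s - \<mu>)))" using step by simp
  finally show ?case .
qed

lemma mean_lift: assumes "1 \<le> k" "k \<le> d" shows "Ex k (lift k g) = Ex 1 (lift 1 g)"
  using assms
proof (induction k rule: dec_induct)
  case base then show ?case by simp
next
  case (step k)
  have "Ex (Suc k) (lift (Suc k) g) = Ex (Suc k) (Up k (lift k g))"
    using step by (intro Ex_cong) (simp add: lift_Up)
  also have "\<dots> = Ex k (lift k g)" using step by (intro Ex_Up) simp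
  finally show ?case using step by simp
qed

lemma lift_ins: assumes r: "r \<in> faces X n" and a: "a \<in> Vx r"
  shows "lift (Suc n) g (insert a r) = (g a + (\<Sum>v\<in>r. g v)) / real (Suc n)"
  using a r unfolding lift_def Vx_def by (simp add: faces_mem fin_mem)

lemma lift_lip:
  assumes g01: "\<forall>v. {v} \<in> X \<longrightarrow> 0 \<le> g v \<and> g v \<le> 1"
    and r: "r \<in> faces X n" and a: "a \<in> Vx r" and b: "b \<in> Vx r"
  shows "\<bar>lift (Suc n) g (insert a r) - lift (Suc n) g (insert b r)\<bar> \<le> 1 / real (Suc n)"
proof -
  have "{a} \<in> X" "{b} \<in> X" using a b down unfolding Vx_def by auto
  then have ga: "0 \<le> g a" "g a \<le> 1" and gb: "0 \<le> g b" "g b \<le> 1" using g01 by auto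
  have "lift (Suc n) g (insert a r) - lift (Suc n) g (insert b r) = (g a - g b) / real (Suc n)"
    unfolding lift_ins[OF r a] lift_ins[OF r b] by (simp add: diff_divide_distrib[symmetric])
  moreover have "\<bar>g a - g b\<bar> \<le> 1" using ga gb by simp
  ultimately show ?thesis by (simp add: divide_right_mono)
qed

lemma lift_01:
  assumes g01: "\<forall>v. {v} \<in> X \<longrightarrow> 0 \<le> g v \<and> g v \<le> 1"
    and s: "s \<in> faces X k" and k: "1 \<le> k"
  shows "0 \<le> lift k g s \<and> lift k g s \<le> 1"
proof -
  have fs: "finite s" and cs: "card s = k" and sX: "s \<in> X" using s by (auto simp: faces_mem fin_mem)
  have gv: "0 \<le> g v \<and> g v \<le> 1" if "v \<in> s" for v using g01 down[OF sX] that by auto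
  have "0 \<le> (\<Sum>v\<in>s. g v)" using gv by (intro sum_nonneg) auto
  moreover have "(\<Sum>v\<in>s. g v) \<le> (\<Sum>v\<in>s. 1)" using gv by (intro sum_mono) auto
  ultimately show ?thesis unfolding lift_def using cs k by (simp add: divide_le_eq)
qed

end

lemma ose_mono: "one_sided_expander Y m q a \<Longrightarrow> a \<le> b \<Longrightarrow> one_sided_expander Y m q b"
  unfolding one_sided_expander_def by (meson le_less_trans)

lemma exp_half_le4: "exp (1/2::real) \<le> 4"
  using exp_bound[of "1/2::real"] by (simp add: power2_eq_square)

lemma exp1_le3: "exp (1::real) \<le> 3"
  using exp_bound[of "1::real"] by simp

lemma kt_alg: fixes a y :: real assumes "a > 0" "y > 0" shows "a / y * (1 / a)^2 / 4 * (a * y / 4) = 1/16"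
  using assms by (simp add: field_simps power2_eq_square)
lemma sq_alg: fixes k M :: real assumes "M > 0" "k \<ge> 0" shows "sqrt (k / (144 * M^2)) = 1 / (12 * M) * sqrt k"
proof -
  have "sqrt (144 * M^2) = 12 * M" using assms by (simp add: real_sqrt_mult)
  then show ?thesis by (simp add: real_sqrt_divide)
qed
lemma mr_alg: fixes k M mr :: real assumes "M > 0" "mr = k / (8 * M^2)" shows "k / (36 * M^2) = mr * (2/9)"
  using assms by (simp add: field_simps)

context cplx
begin

lemma one_tail:
  fixes g :: "'a \<Rightarrow> real" and \<epsilon> \<eta> :: real and k :: nat
  assumes eta: "\<eta> > 0" and SI: "spectrally_independent X d p \<eta>" and kd: "k \<le> d"
    and g01: "\<forall>v. {v} \<in> X \<longrightarrow> 0 \<le> g v \<and> g v \<le> 1" and eps: "\<epsilon> > 0"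
  shows "(\<Sum>s\<in>{s \<in> faces X k. lift k g s - (\<Sum>s\<in>faces X k. face_dist X d p k s * lift k g s) \<ge> \<epsilon>}. face_dist X d p k s)
      \<le> 4 * exp (- (1 / (12 * max 1 (sqrt \<eta>))) * \<epsilon> * sqrt (real k))"
proof -
  define M where "M = max 1 (sqrt \<eta>)"
  define c where "c = 1 / (12 * M)"
  define E where "E = (\<Sum>s\<in>faces X k. face_dist X d p k s * lift k g s)"
  define A where "A = {s \<in> faces X k. lift k g s - E \<ge> \<epsilon>}"
  define Cb where "Cb = real (d choose k)"
  define Pr where "Pr = (\<Sum>s\<in>A. face_dist X d p k s)"
  define RHS where "RHS = 4 * exp (- c * \<epsilon> * sqrt (real k))"
  have Cb: "Cb > 0" unfolding Cb_def using kd by simp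
  have fd: "face_dist X d p k s = Z s / Cb" for s unfolding Cb_def by (rule face_dist_Z)
  have EEx: "E = Ex k (lift k g)" unfolding E_def Ex_def fd Cb_def by (simp add: sum_divide_distrib)
  have Afin: "finite A" "A \<subseteq> faces X k" unfolding A_def using fin_faces by auto
  have Pr0: "Pr \<ge> 0" unfolding Pr_def fd using Z_nonneg Cb by (intro sum_nonneg divide_nonneg_pos) auto
  have Pr1: "Pr \<le> 1"
  proof -
    have "Pr \<le> (\<Sum>s\<in>faces X k. Z s / Cb)"
      unfolding Pr_def fd using Afin fin_faces Z_nonneg Cb by (intro sum_mono2) (auto intro: divide_nonneg_pos)
    also have "\<dots> = Ex k (\<lambda>_. 1)" unfolding Ex_def Cb_def by (simp add: sum_divide_distrib)
    also have "\<dots> = 1" by (rule Ex_const[OF kd])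
    finally show ?thesis .
  qed
  have M1: "M \<ge> 1" unfolding M_def by simp
  have M2: "M^2 \<ge> \<eta>"
  proof -
    have "sqrt \<eta> \<le> M" unfolding M_def by simp
    then have "(sqrt \<eta>)^2 \<le> M^2" using eta by (intro power_mono) auto
    then show ?thesis using eta by simp
  qed
  show ?thesis
  proof (cases "A = {}")
    case True
    then show ?thesis unfolding A_def[symmetric] E_def[symmetric] by simp
  next
    case Ane: False
    then obtain s0 where s0: "s0 \<in> A" by blast
    have k1: "k \<ge> 1"
    proof (rule ccontr)
      assume "\<not> k \<ge> 1"
      then have "k = 0" by simp
      then have "lift k g s0 = 0" unfolding lift_def by simp
      moreover have "E = 0" unfolding E_def using \<open>k = 0\<close> by (simp add: lift_def)
      ultimately show False using s0 eps unfolding A_def by simp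
    qed
    have f01: "0 \<le> lift k g s \<and> lift k g s \<le> 1" if "s \<in> faces X k" for s
      by (rule lift_01[OF g01 that k1])
    have E01: "0 \<le> E \<and> E \<le> 1"
    proof -
      have "Ex k (\<lambda>_. 0) \<le> Ex k (lift k g)" "Ex k (lift k g) \<le> Ex k (\<lambda>_. 1)"
        using f01 by (auto intro: Ex_mono)
      then show ?thesis unfolding EEx Ex_const[OF kd] by simp
    qed
    have eps1: "\<epsilon> \<le> 1"
    proof -
      have "s0 \<in> faces X k" "lift k g s0 - E \<ge> \<epsilon>" using s0 unfolding A_def by auto
      then show ?thesis using f01 E01 by force
    qed
    show ?thesis
    proof (cases "RHS \<ge> 1")
      case True
      then show ?thesis using Pr1 unfolding RHS_def Pr_def A_def E_def c_def M_def by simp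
    next
      case small: False
      have big: "c * \<epsilon> * sqrt (real k) > 1"
      proof (rule ccontr)
        assume "\<not> ?thesis"
        then have "exp (- 1) \<le> exp (- c * \<epsilon> * sqrt (real k))" by simp
        moreover have "1 \<le> 4 * exp (- 1::real)" using exp1_le3 by (simp add: exp_minus field_simps)
        ultimately show False using small unfolding RHS_def by linarith
      qed
      have ck: "c * sqrt (real k) > 1"
      proof -
        have "c * \<epsilon> * sqrt (real k) \<le> c * 1 * sqrt (real k)"
          using eps1 unfolding c_def using M1 by (intro mult_right_mono mult_left_mono) auto
        then show ?thesis using big by simp
      qed
      have Mp: "M > 0" using M1 by simp
      have kM: "real k > 144 * M^2"
      proof -
        have "sqrt (real k) > 12 * M" using ck Mp unfolding c_def by (simp add: field_simps)
        then have "(12 * M)^2 < (sqrt (real k))^2" using Mp by (intro power_strict_mono) auto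
        then show ?thesis by (simp add: power_mult_distrib)
      qed
      define mr where "mr = real k / (8 * M^2)"
      have M2p: "M^2 \<ge> 1" using M1 by (simp add: one_le_power)
      have mr18: "mr > 18"
      proof -
        have p: "8 * M^2 > 0" using Mp by simp
        have "18 * (8 * M^2) < real k" using kM by simp
        then show ?thesis unfolding mr_def using pos_less_divide_eq[OF p] by blast
      qed
      have mrk: "mr \<le> real k / 8" unfolding mr_def using M2p by (intro divide_left_mono) auto
      define m where "m = nat \<lfloor>mr\<rfloor>"
      have mreal: "real m \<le> mr" "mr < real m + 1" unfolding m_def using mr18
        by (auto simp: of_nat_nat)
      have m2: "m \<ge> 2" using mreal mr18 by linarith
      have mk: "m \<le> k" using mreal mrk by linarith
      obtain n where mn: "m = Suc n" using m2 by (cases m) auto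
      have n1: "n \<ge> 1" using m2 mn by simp
      have md: "Suc n \<le> d" using mk kd mn by simp
      have mle: "real m \<le> real d / 8" using mreal mrk kd by linarith
      have meta: "real m * \<eta> \<le> real d / 8"
      proof -
        have "real m * \<eta> \<le> mr * \<eta>" using mreal eta by (intro mult_right_mono) auto
        also have "\<dots> = real k / 8 * (\<eta> / M^2)" unfolding mr_def using Mp by (simp add: field_simps)
        also have "\<dots> \<le> real k / 8 * 1" using M2 Mp eta by (intro mult_left_mono) (auto simp: field_simps)
        finally show ?thesis using kd by simp
      qed
      define D where "D = real d - real m + 2"
      have Dge: "D \<ge> 7 * real d / 8 + 2" unfolding D_def using mle by simp
      have Dp: "D > 0" using Dge by simp
      define \<gamma> where "\<gamma> = \<eta> / D"
      have g0: "\<gamma> \<ge> 0" unfolding \<gamma>_def using eta Dp by simp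
      have mg: "real m * \<gamma> \<le> 1/7"
      proof -
        have "7 * (real m * \<eta>) \<le> D" using meta Dge by simp
        then show ?thesis unfolding \<gamma>_def using Dp by (simp add: field_simps)
      qed
      have ng: "real n * \<gamma> \<le> 1/7"
      proof -
        have "real n * \<gamma> \<le> real m * \<gamma>" using g0 mn by (intro mult_right_mono) auto
        then show ?thesis using mg by linarith
      qed
      have g17: "\<gamma> \<le> 1/7"
      proof -
        have "1 * \<gamma> \<le> real n * \<gamma>" using g0 n1 by (intro mult_right_mono) auto
        then show ?thesis using ng by linarith
      qed
      have g1: "\<gamma> < 1" using g17 by simp
      have GH: "(\<Sum>b\<in>Vx r. \<Sum>a\<in>Vx r - {b}. Z (insert a (insert b r)) * h b * h a)
        \<le> real (d - Suc i) * (\<gamma> * (\<Sum>a\<in>Vx r. Z (insert a r) * (h a)^2)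
            + (1 - \<gamma>) * (\<Sum>a\<in>Vx r. Z (insert a r) * h a)^2 / (real (d - i) * Z r))"
        if i: "Suc (Suc i) \<le> Suc n" and r: "r \<in> faces X i" for i r h
      proof -
        define j where "j = d - i"
        have j2: "2 \<le> j" "j \<le> d" unfolding j_def using i md by auto
        have rj: "r \<in> faces X (d - j)" using r j2 unfolding j_def by (simp add: diff_diff_cancel)
        have ose: "one_sided_expander (link_cx X r) j (link_dist X d p r) (\<eta> / real j)"
          using SI j2 rj unfolding spectrally_independent_def by blast
        have "real j \<ge> D" unfolding D_def j_def using i mn md by simp
        then have "\<eta> / real j \<le> \<gamma>" unfolding \<gamma>_def using eta Dp by (intro divide_left_mono) auto
        from ose_mono[OF ose this] have "one_sided_expander (link_cx X r) (d - i) (link_dist X d p r) \<gamma>"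
          unfolding j_def .
        then show ?thesis using i md by (intro garland_vertex[OF r]) (auto simp: g1)
      qed
      define \<mu> where "\<mu> = Ex 1 (lift 1 g)"
      have Emu: "E = \<mu>" unfolding EEx \<mu>_def by (rule mean_lift[OF k1 kd])
      have mmu: "Ex m (lift m g) = \<mu>" unfolding \<mu>_def using m2 mk kd by (intro mean_lift) auto
      have mu01: "0 \<le> \<mu> \<and> \<mu> \<le> 1" using E01 Emu by simp
      define G where "G s = lift m g s - \<mu>" for s
      have Lip: "\<bar>G (insert a r) - G (insert b r)\<bar> \<le> 1 / real (Suc n)"
        if "r \<in> faces X n" "a \<in> Vx r" "b \<in> Vx r" for r a b
        unfolding G_def mn using lift_lip[OF g01 that] by simp
      have meanG: "Ex (Suc n) G = 0" unfolding G_def Ex_diff mn[symmetric] mmu Ex_const[OF mk[THEN order_trans, OF kd]] by simp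
      have bndG: "\<bar>G x\<bar> \<le> 1" if "x \<in> faces X (Suc n)" for x
        using lift_01[OF g01 that] mu01 unfolding G_def mn by (auto simp: abs_le_iff)
      define y where "y = (1 - \<gamma>)^n"
      have y67: "y \<ge> 6/7"
      proof -
        have "1 + real n * (- \<gamma>) \<le> (1 + - \<gamma>)^n" using g1 by (intro Bernoulli_inequality) simp
        then show ?thesis unfolding y_def using ng by simp
      qed
      have yp: "y > 0" using y67 by simp
      define t where "t = sqrt (real m * y) / 2"
      have t0: "t \<ge> 0" unfolding t_def using yp by simp
      have t2: "t^2 = real m * y / 4" unfolding t_def using yp by (simp add: power_divide)
      have kt: "real (Suc n) / (1 - \<gamma>)^n * (1 / real (Suc n))^2 / 4 * t^2 \<le> 1/16"
        unfolding t2 y_def[symmetric] mn[symmetric] using kt_alg[of "real m" y] yp m2 by simp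
      have GMb: "Ex (Suc n) (\<lambda>s. exp (t * G s)) \<le> exp (1/2)"
        by (rule GM_final[OF md g0 g1 GH Lip meanG bndG t0 kt])
      have J: "Ex k (\<lambda>s. exp (t * (lift k g s - \<mu>))) \<le> exp (1/2)"
      proof -
        have "Ex k (\<lambda>s. exp (t * (lift k g s - \<mu>))) \<le> Ex m (\<lambda>s. exp (t * (lift m g s - \<mu>)))"
          using m2 mk kd by (intro jensen) auto
        also have "\<dots> \<le> exp (1/2)" using GMb unfolding G_def mn by simp
        finally show ?thesis .
      qed
      have Mk: "Pr \<le> exp (- t * \<epsilon>) * Ex k (\<lambda>s. exp (t * (lift k g s - \<mu>)))"
      proof -
        have "Pr = (\<Sum>s\<in>A. Z s / Cb)" unfolding Pr_def fd ..
        also have "\<dots> \<le> (\<Sum>s\<in>A. Z s / Cb * exp (t * (lift k g s - \<mu>) - t * \<epsilon>))"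
        proof (rule sum_mono)
          fix s assume "s \<in> A"
          then have "lift k g s - \<mu> \<ge> \<epsilon>" unfolding A_def Emu by simp
          then have "t * (lift k g s - \<mu>) - t * \<epsilon> \<ge> 0" using t0 by (simp add: right_diff_distrib[symmetric])
          then have e1: "exp (t * (lift k g s - \<mu>) - t * \<epsilon>) \<ge> 1" by simp
          have nn: "Z s / Cb \<ge> 0" using Z_nonneg[of s] Cb by simp
          have "Z s / Cb * 1 \<le> Z s / Cb * exp (t * (lift k g s - \<mu>) - t * \<epsilon>)"
            by (rule mult_left_mono[OF e1 nn])
          then show "Z s / Cb \<le> Z s / Cb * exp (t * (lift k g s - \<mu>) - t * \<epsilon>)" by simp
        qed
        also have "\<dots> \<le> (\<Sum>s\<in>faces X k. Z s / Cb * exp (t * (lift k g s - \<mu>) - t * \<epsilon>))"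
          using Afin fin_faces Z_nonneg Cb by (intro sum_mono2) (auto intro: divide_nonneg_pos)
        also have "\<dots> = (\<Sum>s\<in>faces X k. exp (- t * \<epsilon>) * (Z s * exp (t * (lift k g s - \<mu>))) / Cb)"
          by (intro sum.cong refl) (simp add: exp_diff exp_minus exp_add field_simps)
        also have "\<dots> = exp (- t * \<epsilon>) * Ex k (\<lambda>s. exp (t * (lift k g s - \<mu>)))"
          unfolding Ex_def Cb_def by (simp add: sum_distrib_left sum_divide_distrib)
        finally show ?thesis .
      qed
      have tc: "t \<ge> c * sqrt (real k)"
      proof -
        have "real m * y \<ge> (mr - 1) * (6/7)" using mreal y67 mr18 by (intro mult_mono) auto
        moreover have "(mr - 1) * (6/7) \<ge> real k / (36 * M^2)"
          unfolding mr_alg[OF Mp mr_def] using mr18 by simp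
        ultimately have "real m * y / 4 \<ge> real k / (144 * M^2)" by simp
        then have "sqrt (real k / (144 * M^2)) \<le> sqrt (real m * y / 4)" by (rule real_sqrt_le_mono)
        moreover have "sqrt (real k / (144 * M^2)) = c * sqrt (real k)"
          unfolding c_def using sq_alg[OF Mp, of "real k"] by simp
        moreover have "sqrt (real m * y / 4) = t" unfolding t_def by (simp add: real_sqrt_divide)
        ultimately show ?thesis by simp
      qed
      have "Pr \<le> exp (- t * \<epsilon>) * exp (1/2)"
        using Mk J by (meson exp_ge_zero mult_left_mono order_trans)
      also have "\<dots> \<le> exp (- (c * sqrt (real k)) * \<epsilon>) * 4"
        using tc eps exp_half_le4 by (intro mult_mono) auto
      also have "\<dots> = RHS" unfolding RHS_def by (simp add: mult.commute mult.left_commute)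
      finally show ?thesis unfolding RHS_def Pr_def A_def E_def c_def M_def by simp
    qed
  qed
qed

end

theorem mainTheorem3:
  fixes X :: "'a set set" and d k :: nat and p :: "'a set \<Rightarrow> real"
    and g :: "'a \<Rightarrow> real" and \<eta> \<epsilon> :: real
  assumes "\<eta> > 0"
    and "uniform_complex X d"
    and "full_support_dist X d p"
    and "spectrally_independent X d p \<eta>"
    and "k \<le> d"
    and "\<forall>v. {v} \<in> X \<longrightarrow> 0 \<le> g v \<and> g v \<le> 1"
    and "\<epsilon> > 0"
  shows "let f = lift k g;
             E = (\<Sum>s\<in>faces X k. face_dist X d p k s * f s);
             c = 1 / (12 * max 1 (sqrt \<eta>))
         in (\<Sum>s\<in>{s \<in> faces X k. f s - E \<ge> \<epsilon>}. face_dist X d p k s) \<le> 4 * exp (- c * \<epsilon> * sqrt (real k))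
          \<and> (\<Sum>s\<in>{s \<in> faces X k. f s - E \<le> - \<epsilon>}. face_dist X d p k s) \<le> 4 * exp (- c * \<epsilon> * sqrt (real k))"
proof -
  interpret cplx X d p using assms(2,3) by unfold_locales
  have up: "(\<Sum>s\<in>{s \<in> faces X k. lift k g s - (\<Sum>s\<in>faces X k. face_dist X d p k s * lift k g s) \<ge> \<epsilon>}. face_dist X d p k s)
      \<le> 4 * exp (- (1 / (12 * max 1 (sqrt \<eta>))) * \<epsilon> * sqrt (real k))"
    by (rule one_tail[OF assms(1,4,5,6,7)])
  define g' where "g' v = 1 - g v" for v
  have g'01: "\<forall>v. {v} \<in> X \<longrightarrow> 0 \<le> g' v \<and> g' v \<le> 1" using assms(6) unfolding g'_def by auto
  have low': "(\<Sum>s\<in>{s \<in> faces X k. lift k g' s - (\<Sum>s\<in>faces X k. face_dist X d p k s * lift k g' s) \<ge> \<epsilon>}. face_dist X d p k s)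
      \<le> 4 * exp (- (1 / (12 * max 1 (sqrt \<eta>))) * \<epsilon> * sqrt (real k))"
    by (rule one_tail[OF assms(1,4,5) g'01 assms(7)])
  define E where "E = (\<Sum>s\<in>faces X k. face_dist X d p k s * lift k g s)"
  define E' where "E' = (\<Sum>s\<in>faces X k. face_dist X d p k s * lift k g' s)"
  have fd1: "(\<Sum>s\<in>faces X k. face_dist X d p k s) = 1"
  proof -
    have "(\<Sum>s\<in>faces X k. face_dist X d p k s) = Ex k (\<lambda>_. 1)"
      unfolding Ex_def face_dist_Z by (simp add: sum_divide_distrib)
    then show ?thesis using Ex_const[OF assms(5)] by simp
  qed
  have seteq: "{s \<in> faces X k. lift k g' s - E' \<ge> \<epsilon>} = {s \<in> faces X k. lift k g s - E \<le> - \<epsilon>}"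
  proof (cases "k = 0")
    case True
    then have "E = 0" "E' = 0" unfolding E_def E'_def lift_def by simp_all
    then show ?thesis using True assms(7) unfolding lift_def by auto
  next
    case False
    have lg: "lift k g' s = 1 - lift k g s" if "s \<in> faces X k" for s
    proof -
      have "card s = k" using that by (simp add: faces_mem)
      then show ?thesis unfolding lift_def g'_def using False by (simp add: sum_subtractf diff_divide_distrib)
    qed
    have "E' = (\<Sum>s\<in>faces X k. face_dist X d p k s * (1 - lift k g s))"
      unfolding E'_def by (intro sum.cong refl) (simp add: lg)
    also have "\<dots> = (\<Sum>s\<in>faces X k. face_dist X d p k s) - E" unfolding E_def
      by (simp add: right_diff_distrib sum_subtractf)
    also have "\<dots> = 1 - E" using fd1 by simp
    finally have "E' = 1 - E" .
    then show ?thesis using lg by auto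
  qed
  show ?thesis
    using up low' unfolding Let_def E_def[symmetric] E'_def[symmetric] seteq by simp
qed

end
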